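(* The disjoint union of finitely many spectrally threshold dominated graphs is spectrally threshold dominated, and the complement of a spectrally threshold dominated graph is spectrally threshold dominated.
   Context: All graphs are finite and simple. For a graph $G$ on $n$ nodes, the Laplacian eigenvalues (eigenvalues of $L(G)=D(G)-A(G)$) are $\lambda_1(G)\ge\dots\ge\lambda_n(G)=0$. A threshold graph is a graph obtainable from the empty graph by repeatedly adding a new node that is either isolated or adjacent to all previously added nodes. A graph $G$ on $n$ nodes with $m$ edges is spectrally threshold dominated if for each $k\in\{1,\dots,n\}$ there is a threshold graph $T_k$ on $n$ nodes with $m$ edges satisfying $\sum_{i=1}^k\lambda_i(T_k)\ge\sum_{i=1}^k\lambda_i(G)$. *)

theory Defs
  imports "Jordan_Normal_Form.Char_Poly"
begin

text \<open>A finite simple graph on the node set {0..<n} is a pair (n, E) with E a symmetric,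
irreflexive adjacency relation that only relates nodes below n.\<close>

type_synonym graph = "nat \<times> (nat \<Rightarrow> nat \<Rightarrow> bool)"

definition wf_graph :: "graph \<Rightarrow> bool" where
  "wf_graph G \<longleftrightarrow> (\<forall>i j. snd G i j \<longrightarrow> i < fst G \<and> j < fst G \<and> i \<noteq> j \<and> snd G j i)"

definition num_edges :: "graph \<Rightarrow> nat" where
  "num_edges G = card {(i, j). i < j \<and> j < fst G \<and> snd G i j}"

definition gdegree :: "graph \<Rightarrow> nat \<Rightarrow> nat" where
  "gdegree G i = card {j. j < fst G \<and> snd G i j}"

definition laplacian :: "graph \<Rightarrow> real mat" where
  "laplacian G = mat (fst G) (fst G)
     (\<lambda>(i, j). if i = j then real (gdegree G i) else if snd G i j then -1 else 0)"

definition lap_eigenvalues :: "graph \<Rightarrow> real list" where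
  "lap_eigenvalues G = (THE xs. length xs = fst G \<and> sorted_wrt (\<ge>) xs \<and>
      char_poly (laplacian G) = prod_list (map (\<lambda>a. [:-a, 1:]) xs))"

definition lap_eigsum :: "graph \<Rightarrow> nat \<Rightarrow> real" where
  "lap_eigsum G k = sum_list (take k (lap_eigenvalues G))"

text \<open>Threshold graphs built in canonical node order: the node added at step n gets label n.\<close>
inductive threshold_canon :: "graph \<Rightarrow> bool" where
  empty: "threshold_canon (0, \<lambda>_ _. False)"
| add_isolated: "threshold_canon (n, E) \<Longrightarrow> threshold_canon (Suc n, E)"
| add_dominating: "threshold_canon (n, E) \<Longrightarrow>
     threshold_canon (Suc n, \<lambda>i j. E i j \<or> (i = n \<and> j < n) \<or> (j = n \<and> i < n))"

definition is_threshold :: "graph \<Rightarrow> bool" where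
  "is_threshold G \<longleftrightarrow> wf_graph G \<and> (\<exists>T p. threshold_canon T \<and> fst T = fst G \<and>
      bij_betw p {..<fst G} {..<fst G} \<and>
      (\<forall>i<fst G. \<forall>j<fst G. snd G i j \<longleftrightarrow> snd T (p i) (p j)))"

definition spectrally_threshold_dominated :: "graph \<Rightarrow> bool" where
  "spectrally_threshold_dominated G \<longleftrightarrow>
     (\<forall>k \<in> {1..fst G}. \<exists>T. is_threshold T \<and> fst T = fst G \<and> num_edges T = num_edges G \<and>
        lap_eigsum T k \<ge> lap_eigsum G k)"

definition disjoint_union :: "graph \<Rightarrow> graph \<Rightarrow> graph" where
  "disjoint_union G H = (fst G + fst H, \<lambda>i j.
      (i < fst G \<and> j < fst G \<and> snd G i j) \<or>
      (fst G \<le> i \<and> fst G \<le> j \<and> snd H (i - fst G) (j - fst G)))"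

definition disjoint_union_list :: "graph list \<Rightarrow> graph" where
  "disjoint_union_list Gs = foldr disjoint_union Gs (0, \<lambda>_ _. False)"

definition complement :: "graph \<Rightarrow> graph" where
  "complement G = (fst G, \<lambda>i j. i < fst G \<and> j < fst G \<and> i \<noteq> j \<and> \<not> snd G i j)"

end

theory Submission
  imports Defs
begin


lemma lap_carrier[simp]: "laplacian G \<in> carrier_mat (fst G) (fst G)"
  unfolding laplacian_def by auto

lemma lap_dim[simp]: "dim_row (laplacian G) = fst G" "dim_col (laplacian G) = fst G"
  unfolding laplacian_def by auto

lemma lap_index: "i < fst G \<Longrightarrow> j < fst G \<Longrightarrow> laplacian G $$ (i,j) =
   (if i = j then real (gdegree G i) else if snd G i j then -1 else 0)"
  unfolding laplacian_def by auto

lemma gdegree_sum: "real (gdegree G i) = (\<Sum>j<fst G. if snd G i j then 1 else 0)"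
proof -
  have "(\<Sum>j<fst G. (if snd G i j then 1 else 0::real)) = real (card ({..<fst G} \<inter> {j. snd G i j}))"
    by (simp add: sum.If_cases)
  also have "{..<fst G} \<inter> {j. snd G i j} = {j. j < fst G \<and> snd G i j}" by auto
  finally show ?thesis unfolding gdegree_def by simp
qed

lemma wf_sym: "wf_graph G \<Longrightarrow> snd G i j = snd G j i"
  unfolding wf_graph_def by blast

lemma wf_irrefl: "wf_graph G \<Longrightarrow> \<not> snd G i i"
  unfolding wf_graph_def by blast

lemma wf_range: "wf_graph G \<Longrightarrow> snd G i j \<Longrightarrow> i < fst G \<and> j < fst G"
  unfolding wf_graph_def by blast

lemma quad_form_identity:
  fixes f :: "nat \<Rightarrow> complex" and E :: "nat \<Rightarrow> nat \<Rightarrow> bool"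
  assumes sym: "\<And>i j. E i j = E j i"
  shows "2 * (\<Sum>i<n. cnj (f i) * (of_nat (card {j. j < n \<and> E i j}) * f i - (\<Sum>j<n. if E i j then f j else 0)))
       = (\<Sum>i<n. \<Sum>j<n. if E i j then (f i - f j) * cnj (f i - f j) else 0)"
proof -
  have deg: "of_nat (card {j. j < n \<and> E i j}) = (\<Sum>j<n. if E i j then 1 else (0::complex))" for i
  proof -
    have "(\<Sum>j<n. (if E i j then 1 else 0::complex)) = of_nat (card ({..<n} \<inter> {j. E i j}))"
      by (simp add: sum.If_cases)
    also have "{..<n} \<inter> {j. E i j} = {j. j < n \<and> E i j}" by auto
    finally show ?thesis by simp
  qed
  define A where "A = (\<Sum>i<n. \<Sum>j<n. if E i j then f i * cnj (f i) else 0)"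
  define B where "B = (\<Sum>i<n. \<Sum>j<n. if E i j then f j * cnj (f i) else 0)"
  have A2: "(\<Sum>i<n. \<Sum>j<n. if E i j then f j * cnj (f j) else 0) = A"
    unfolding A_def by (subst sum.swap) (simp add: sym)
  have B2: "(\<Sum>i<n. \<Sum>j<n. if E i j then f i * cnj (f j) else 0) = B"
    unfolding B_def by (subst sum.swap) (simp add: sym)
  have R: "(\<Sum>i<n. \<Sum>j<n. if E i j then (f i - f j) * cnj (f i - f j) else 0)
      = (\<Sum>i<n. \<Sum>j<n. (if E i j then f i * cnj (f i) else 0) + (if E i j then f j * cnj (f j) else 0)
           - (if E i j then f i * cnj (f j) else 0) - (if E i j then f j * cnj (f i) else 0))"
    by (intro sum.cong refl) (auto simp: algebra_simps)
  also have "\<dots> = A + (\<Sum>i<n. \<Sum>j<n. if E i j then f j * cnj (f j) else 0)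
      - (\<Sum>i<n. \<Sum>j<n. if E i j then f i * cnj (f j) else 0) - B"
    unfolding A_def B_def by (simp add: sum_subtractf sum.distrib)
  also have "\<dots> = 2 * (A - B)" unfolding A2 B2 by simp
  finally have R': "(\<Sum>i<n. \<Sum>j<n. if E i j then (f i - f j) * cnj (f i - f j) else 0) = 2 * (A - B)" .
  have L: "(\<Sum>i<n. cnj (f i) * (of_nat (card {j. j < n \<and> E i j}) * f i - (\<Sum>j<n. if E i j then f j else 0)))
     = A - B"
    unfolding A_def B_def deg
    by (simp add: sum_subtractf sum_distrib_left sum_distrib_right algebra_simps if_distrib cong: if_cong)
  show ?thesis using R' L by simp
qed


lemma lap_mult_vec:
  fixes v :: "complex vec"
  assumes wf: "wf_graph G" and v: "v \<in> carrier_vec (fst G)" and i: "i < fst G"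
  shows "(map_mat complex_of_real (laplacian G) *\<^sub>v v) $ i =
     of_nat (card {j. j < fst G \<and> snd G i j}) * v $ i - (\<Sum>j<fst G. if snd G i j then v $ j else 0)"
proof -
  let ?n = "fst G"
  have "(map_mat complex_of_real (laplacian G) *\<^sub>v v) $ i = (\<Sum>j<?n. complex_of_real (laplacian G $$ (i,j)) * v $ j)"
    using i v by (simp add: scalar_prod_def row_def lessThan_atLeast0)
  also have "\<dots> = (\<Sum>j<?n. (if j = i then of_nat (card {j. j < fst G \<and> snd G i j}) * v $ i else 0)
        - (if snd G i j then v $ j else 0))"
    by (intro sum.cong refl) (auto simp: lap_index i gdegree_def wf_irrefl[OF wf])
  also have "\<dots> = of_nat (card {j. j < fst G \<and> snd G i j}) * v $ i - (\<Sum>j<?n. if snd G i j then v $ j else 0)"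
    using i by (simp add: sum_subtractf)
  finally show ?thesis .
qed

lemma lap_eig_real_nonneg:
  assumes wf: "wf_graph G" and ev: "eigenvalue (map_mat complex_of_real (laplacian G)) a"
  shows "\<exists>r\<ge>0. a = of_real r"
proof -
  let ?n = "fst G" let ?E = "snd G"
  let ?L = "map_mat complex_of_real (laplacian G)"
  obtain v where v: "eigenvector ?L v a" using ev unfolding eigenvalue_def by auto
  hence vc: "v \<in> carrier_vec ?n" and v0: "v \<noteq> 0\<^sub>v ?n" and Lv: "?L *\<^sub>v v = a \<cdot>\<^sub>v v"
    unfolding eigenvector_def by auto
  have comp: "a * v $ i = of_nat (card {j. j < ?n \<and> ?E i j}) * v $ i - (\<Sum>j<?n. if ?E i j then v $ j else 0)"
    if i: "i < ?n" for i
  proof -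
    have "(?L *\<^sub>v v) $ i = a * v $ i" using Lv i vc by simp
    thus ?thesis using lap_mult_vec[OF wf vc i] by simp
  qed
  define S where "S = (\<Sum>i<?n. (cmod (v $ i))^2)"
  define R where "R = (\<Sum>i<?n. \<Sum>j<?n. if ?E i j then (cmod (v $ i - v $ j))^2 else 0)"
  have S0: "S > 0"
  proof -
    from v0 vc obtain i where i: "i < ?n" "v $ i \<noteq> 0"
      by (metis carrier_vecD eq_vecI index_zero_vec(1) index_zero_vec(2))
    have "(cmod (v $ i))^2 > 0" using i by simp
    moreover have "(cmod (v $ i))^2 \<le> S" unfolding S_def
      by (rule member_le_sum) (use i in auto)
    ultimately show ?thesis by linarith
  qed
  have R0: "R \<ge> 0" unfolding R_def by (intro sum_nonneg) auto
  have "2 * (\<Sum>i<?n. cnj (v $ i) * (a * v $ i)) = (\<Sum>i<?n. \<Sum>j<?n. if ?E i j then (v $ i - v $ j) * cnj (v $ i - v $ j) else 0)"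
  proof -
    have "(\<Sum>i<?n. cnj (v $ i) * (a * v $ i)) = (\<Sum>i<?n. cnj (v $ i) * (of_nat (card {j. j < ?n \<and> ?E i j}) * v $ i - (\<Sum>j<?n. if ?E i j then v $ j else 0)))"
      by (rule sum.cong) (simp_all add: comp)
    thus ?thesis using quad_form_identity[of ?E "\<lambda>i. v $ i" ?n] wf_sym[OF wf] by simp
  qed
  also have "\<dots> = of_real R" unfolding R_def
    unfolding of_real_sum by (intro sum.cong refl) (auto simp: complex_norm_square[symmetric] simp del: complex_cnj_diff)
  finally have eq1: "2 * (\<Sum>i<?n. cnj (v $ i) * (a * v $ i)) = of_real R" .
  have "(\<Sum>i<?n. cnj (v $ i) * (a * v $ i)) = a * of_real S" unfolding S_def
    unfolding of_real_sum sum_distrib_left by (intro sum.cong refl) (auto simp: complex_norm_square[symmetric] algebra_simps)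
  with eq1 have "2 * a * of_real S = of_real R" by (simp add: mult.assoc)
  hence "a = of_real (R / (2 * S))" using S0
    by (simp add: field_simps)
  thus ?thesis using R0 S0 by (intro exI[of _ "R / (2*S)"]) auto
qed


abbreviation lin_prod :: "'a::comm_ring_1 list \<Rightarrow> 'a poly" where
  "lin_prod xs \<equiv> (\<Prod>a\<leftarrow>xs. [:- a, 1:])"

lemma lin_prod_mset: "mset xs = mset ys \<Longrightarrow> lin_prod xs = lin_prod ys"
  by (metis mset_map prod_mset_prod_list)

lemma degree_lin_prod: "degree (lin_prod (xs :: 'a::idom list)) = length xs"
  using degree_linear_factors[of uminus xs] by simp

lemma lin_prod_eq_mset:
  fixes xs ys :: "'a::field list"
  shows "lin_prod xs = lin_prod ys \<Longrightarrow> mset xs = mset ys"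
proof (induction xs arbitrary: ys)
  case Nil
  have "length ys = 0" using degree_lin_prod[of ys] Nil by simp
  thus ?case by simp
next
  case (Cons x xs)
  have "poly (lin_prod (x # xs)) x = 0" by simp
  hence "poly (lin_prod ys) x = 0" unfolding Cons.prems .
  hence "\<exists>p \<in> set (map (\<lambda>a. [:- a, 1:]) ys). poly p x = 0"
    using poly_prod_list_zero_iff by blast
  hence xy: "x \<in> set ys" by auto
  hence m: "mset ys = mset (x # remove1 x ys)" by simp
  hence "lin_prod ys = lin_prod (x # remove1 x ys)" by (rule lin_prod_mset)
  hence "[:- x, 1:] * lin_prod xs = [:- x, 1:] * lin_prod (remove1 x ys)"
    using Cons.prems by (simp only: prod_list.Cons list.map)
  hence "lin_prod xs = lin_prod (remove1 x ys)"
  proof -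
    have ne: "[:- x, 1:] \<noteq> (0 :: 'a poly)" by simp
    thus ?thesis using \<open>[:- x, 1:] * lin_prod xs = [:- x, 1:] * lin_prod (remove1 x ys)\<close> mult_left_cancel by blast
  qed
  hence "mset xs = mset (remove1 x ys)" by (rule Cons.IH)
  thus ?case using xy by simp
qed

lemma sorted_desc_unique:
  fixes xs ys :: "'a::linorder list"
  assumes "sorted_wrt (\<ge>) xs" "sorted_wrt (\<ge>) ys" "mset xs = mset ys"
  shows "xs = ys"
proof -
  have "sorted (rev xs)" "sorted (rev ys)" unfolding sorted_wrt_rev using assms by simp_all
  moreover have "mset (rev xs) = mset (rev ys)" using assms by simp
  ultimately have "rev xs = rev ys" using sorted_sort_id properties_for_sort by metis
  thus ?thesis by simp
qed

lemma lap_eig_exists: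
  assumes wf: "wf_graph G"
  shows "\<exists>xs. length xs = fst G \<and> sorted_wrt (\<ge>) xs \<and> char_poly (laplacian G) = lin_prod xs
     \<and> (\<forall>a\<in>set xs. a \<ge> 0)"
proof -
  let ?n = "fst G" let ?L = "laplacian G"
  let ?Lc = "map_mat complex_of_real ?L"
  have Lc: "?Lc \<in> carrier_mat ?n ?n" by simp
  have cpc: "char_poly ?Lc = map_poly complex_of_real (char_poly ?L)"
    by (rule of_real_hom.char_poly_hom[OF lap_carrier])
  obtain cs where cs: "char_poly ?Lc = lin_prod cs" "length cs = ?n"
    using char_poly_factorized[OF Lc] by blast
  have real: "\<exists>r\<ge>0. c = complex_of_real r" if c: "c \<in> set cs" for c
  proof -
    have "poly (char_poly ?Lc) c = 0" unfolding cs(1) poly_prod_list_zero_iff using c by auto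
    hence "eigenvalue ?Lc c" using eigenvalue_root_char_poly[OF Lc] by simp
    thus ?thesis by (rule lap_eig_real_nonneg[OF wf])
  qed
  define rs where "rs = map Re cs"
  have csrs: "cs = map complex_of_real rs"
    unfolding rs_def
  proof (rule nth_equalityI)
    show "length cs = length (map complex_of_real (map Re cs))" by simp
    fix i assume i: "i < length cs"
    hence "cs ! i \<in> set cs" by simp
    then obtain r where "cs ! i = complex_of_real r" using real by blast
    thus "cs ! i = map complex_of_real (map Re cs) ! i" using i by simp
  qed
  have rs0: "\<forall>a\<in>set rs. a \<ge> 0" unfolding rs_def using real by fastforce
  have "map_poly complex_of_real (lin_prod rs) = lin_prod cs"
  proof -
    interpret mp: map_poly_comm_ring_hom complex_of_real ..
    show ?thesis unfolding csrs mp.hom_prod_list map_map o_def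
      by (simp add: of_real_hom.map_poly_pCons_hom)
  qed
  hence eq: "map_poly complex_of_real (char_poly ?L) = map_poly complex_of_real (lin_prod rs)"
    using cpc cs by simp
  have cpL: "char_poly ?L = lin_prod rs"
  proof (rule poly_eqI)
    fix i
    have "coeff (map_poly complex_of_real (char_poly ?L)) i = coeff (map_poly complex_of_real (lin_prod rs)) i"
      using eq by simp
    thus "coeff (char_poly ?L) i = coeff (lin_prod rs) i" by (simp add: coeff_map_poly)
  qed
  define xs where "xs = rev (sort rs)"
  have "mset xs = mset rs" unfolding xs_def by simp
  hence "lin_prod xs = lin_prod rs" by (rule lin_prod_mset)
  moreover have "sorted_wrt (\<ge>) xs" unfolding xs_def by (simp add: sorted_wrt_rev)
  moreover have "length xs = ?n" unfolding xs_def using cs(2) csrs by simp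
  moreover have "\<forall>a\<in>set xs. a \<ge> 0" unfolding xs_def using rs0 by simp
  ultimately show ?thesis using cpL by metis
qed

lemma lap_eig_unique:
  assumes "sorted_wrt (\<ge>) xs" "char_poly (laplacian G) = lin_prod xs" "wf_graph G"
  shows "lap_eigenvalues G = xs"
proof -
  obtain ys where ys: "length ys = fst G" "sorted_wrt (\<ge>) ys" "char_poly (laplacian G) = lin_prod ys"
    using lap_eig_exists[OF assms(3)] by blast
  have uniq: "zs = ys" if "length zs = fst G \<and> sorted_wrt (\<ge>) zs \<and> char_poly (laplacian G) = lin_prod zs" for zs
  proof -
    have "mset zs = mset ys" using that ys(3) lin_prod_eq_mset by metis
    thus ?thesis using that ys(2) sorted_desc_unique by blast
  qed
  have "lap_eigenvalues G = ys" unfolding lap_eigenvalues_def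
    by (rule the_equality) (use ys uniq in blast)+
  moreover have "xs = ys"
  proof -
    have "mset xs = mset ys" using assms(2) ys(3) lin_prod_eq_mset by metis
    thus ?thesis using assms(1) ys(2) sorted_desc_unique by blast
  qed
  ultimately show ?thesis by simp
qed

lemma lap_eig_props:
  assumes wf: "wf_graph G"
  shows "length (lap_eigenvalues G) = fst G" "sorted_wrt (\<ge>) (lap_eigenvalues G)"
    "char_poly (laplacian G) = lin_prod (lap_eigenvalues G)" "\<forall>a\<in>set (lap_eigenvalues G). a \<ge> 0"
proof -
  obtain xs where xs: "length xs = fst G" "sorted_wrt (\<ge>) xs" "char_poly (laplacian G) = lin_prod xs"
     "\<forall>a\<in>set xs. a \<ge> 0"
    using lap_eig_exists[OF wf] by blast
  have "lap_eigenvalues G = xs" using lap_eig_unique xs wf by blast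
  thus "length (lap_eigenvalues G) = fst G" "sorted_wrt (\<ge>) (lap_eigenvalues G)"
    "char_poly (laplacian G) = lin_prod (lap_eigenvalues G)" "\<forall>a\<in>set (lap_eigenvalues G). a \<ge> 0"
    using xs by auto
qed


lemma wf_union: assumes G: "wf_graph G" and H: "wf_graph H" shows "wf_graph (disjoint_union G H)"
  unfolding wf_graph_def
proof (intro allI impI)
  fix i j assume e: "snd (disjoint_union G H) i j"
  show "i < fst (disjoint_union G H) \<and> j < fst (disjoint_union G H) \<and> i \<noteq> j \<and> snd (disjoint_union G H) j i"
  proof (cases "i < fst G \<and> j < fst G \<and> snd G i j")
    case True thus ?thesis using G unfolding wf_graph_def disjoint_union_def by auto
  next
    case False
    hence h: "fst G \<le> i" "fst G \<le> j" "snd H (i - fst G) (j - fst G)" using e unfolding disjoint_union_def by auto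
    hence "i - fst G < fst H" "j - fst G < fst H" "i - fst G \<noteq> j - fst G" "snd H (j - fst G) (i - fst G)"
      using H unfolding wf_graph_def by blast+
    thus ?thesis using h unfolding disjoint_union_def by auto
  qed
qed

lemma fst_union[simp]: "fst (disjoint_union G H) = fst G + fst H"
  unfolding disjoint_union_def by simp

lemma gdegree_union_low:
  assumes "wf_graph G" "i < fst G"
  shows "gdegree (disjoint_union G H) i = gdegree G i"
proof -
  have "{j. j < fst (disjoint_union G H) \<and> snd (disjoint_union G H) i j} = {j. j < fst G \<and> snd G i j}"
    using assms unfolding disjoint_union_def wf_graph_def by auto
  thus ?thesis unfolding gdegree_def by simp
qed

lemma gdegree_union_high:
  assumes "wf_graph H" "fst G \<le> i"
  shows "gdegree (disjoint_union G H) i = gdegree H (i - fst G)"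
proof -
  have "{j. j < fst (disjoint_union G H) \<and> snd (disjoint_union G H) i j} = (\<lambda>j. j + fst G) ` {j. j < fst H \<and> snd H (i - fst G) j}"
  proof (intro Set.set_eqI iffI)
    fix x assume "x \<in> {j. j < fst (disjoint_union G H) \<and> snd (disjoint_union G H) i j}"
    hence x: "fst G \<le> x" "snd H (i - fst G) (x - fst G)" using assms(2) unfolding disjoint_union_def by auto
    hence "x - fst G < fst H" using assms(1) wf_range by blast
    moreover have "x = (x - fst G) + fst G" using x by simp
    ultimately show "x \<in> (\<lambda>j. j + fst G) ` {j. j < fst H \<and> snd H (i - fst G) j}" using x by blast
  next
    fix x assume "x \<in> (\<lambda>j. j + fst G) ` {j. j < fst H \<and> snd H (i - fst G) j}"
    then obtain j where j: "x = j + fst G" "j < fst H" "snd H (i - fst G) j" by blast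
    thus "x \<in> {j. j < fst (disjoint_union G H) \<and> snd (disjoint_union G H) i j}"
      using assms(2) unfolding disjoint_union_def by auto
  qed
  moreover have "inj (\<lambda>j. j + fst G)" by (simp add: inj_def)
  ultimately show ?thesis unfolding gdegree_def by (simp add: card_image inj_on_def)
qed

lemma lap_union:
  assumes G: "wf_graph G" and H: "wf_graph H"
  shows "laplacian (disjoint_union G H) = four_block_mat (laplacian G) (0\<^sub>m (fst G) (fst H)) (0\<^sub>m (fst H) (fst G)) (laplacian H)"
proof (rule eq_matI)
  fix i j assume i: "i < dim_row (four_block_mat (laplacian G) (0\<^sub>m (fst G) (fst H)) (0\<^sub>m (fst H) (fst G)) (laplacian H))"
    and j: "j < dim_col (four_block_mat (laplacian G) (0\<^sub>m (fst G) (fst H)) (0\<^sub>m (fst H) (fst G)) (laplacian H))"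
  hence i': "i < fst G + fst H" and j': "j < fst G + fst H" by auto
  show "laplacian (disjoint_union G H) $$ (i, j) = four_block_mat (laplacian G) (0\<^sub>m (fst G) (fst H)) (0\<^sub>m (fst H) (fst G)) (laplacian H) $$ (i, j)"
  proof -
    let ?U = "disjoint_union G H"
    have e1: "snd ?U i j = snd G i j" if "i < fst G" "j < fst G" using that unfolding disjoint_union_def by auto
    have e2: "\<not> snd ?U i j" if "i < fst G" "\<not> j < fst G" using that G wf_range unfolding disjoint_union_def by fastforce
    have e3: "\<not> snd ?U i j" if "\<not> i < fst G" "j < fst G" using that G wf_range unfolding disjoint_union_def by fastforce
    have e4: "snd ?U i j = snd H (i - fst G) (j - fst G)" if "\<not> i < fst G" "\<not> j < fst G" using that unfolding disjoint_union_def by auto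
    show ?thesis
    proof (cases "i < fst G"; cases "j < fst G")
      assume a: "i < fst G" "j < fst G"
      thus ?thesis using i' j' e1 by (simp add: lap_index gdegree_union_low[OF G])
    next
      assume a: "i < fst G" "\<not> j < fst G"
      thus ?thesis using i' j' e2 by (simp add: lap_index)
    next
      assume a: "\<not> i < fst G" "j < fst G"
      thus ?thesis using i' j' e3 by (simp add: lap_index)
    next
      assume a: "\<not> i < fst G" "\<not> j < fst G"
      thus ?thesis using i' j' e4 by (auto simp: lap_index gdegree_union_high[OF H])
    qed
  qed
qed auto

lemma char_poly_block_diag:
  fixes A :: "'a::idom mat"
  assumes A: "A \<in> carrier_mat n n" and D: "D \<in> carrier_mat m m"
  shows "char_poly (four_block_mat A (0\<^sub>m n m) (0\<^sub>m m n) D) = char_poly A * char_poly D"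
proof -
  let ?cm = "\<lambda> A. [:0, 1:] \<cdot>\<^sub>m 1\<^sub>m (dim_row A) + map_mat (\<lambda>a. [:- a:]) A"
  have "char_poly (four_block_mat A (0\<^sub>m n m) (0\<^sub>m m n) D) = det (?cm (four_block_mat A (0\<^sub>m n m) (0\<^sub>m m n) D))"
    unfolding char_poly_defs by simp
  also have "?cm (four_block_mat A (0\<^sub>m n m) (0\<^sub>m m n) D) = four_block_mat (?cm A) (0\<^sub>m n m) (0\<^sub>m m n) (?cm D)"
    by (rule eq_matI, insert A D, auto)
  also have "det \<dots> = det (?cm A) * det (?cm D)"
    by (rule det_four_block_mat_lower_left_zero, insert A D, auto)
  finally show ?thesis unfolding char_poly_defs .
qed

lemma sorted_merge: "sorted_wrt (\<ge>) (rev (sort (xs :: real list)))"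
  by (simp add: sorted_wrt_rev)

lemma lap_eig_union:
  assumes G: "wf_graph G" and H: "wf_graph H"
  shows "lap_eigenvalues (disjoint_union G H) = rev (sort (lap_eigenvalues G @ lap_eigenvalues H))"
proof (rule lap_eig_unique[OF sorted_merge _ wf_union[OF G H]])
  have "char_poly (laplacian (disjoint_union G H)) = char_poly (laplacian G) * char_poly (laplacian H)"
    unfolding lap_union[OF G H] by (rule char_poly_block_diag) auto
  also have "\<dots> = lin_prod (lap_eigenvalues G @ lap_eigenvalues H)"
    using lap_eig_props(3)[OF G] lap_eig_props(3)[OF H] by simp
  also have "\<dots> = lin_prod (rev (sort (lap_eigenvalues G @ lap_eigenvalues H)))"
    by (rule lin_prod_mset) simp
  finally show "char_poly (laplacian (disjoint_union G H)) = lin_prod (rev (sort (lap_eigenvalues G @ lap_eigenvalues H)))" .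
qed

lemma take_sum_mono_cons:
  fixes xs :: "real list"
  assumes "sorted_wrt (\<ge>) (x # xs)" "x \<ge> 0"
  shows "sum_list (take m xs) \<le> sum_list (take m (x # xs))"
proof (cases m)
  case 0 thus ?thesis by simp
next
  case (Suc m')
  show ?thesis
  proof (cases "m' < length xs")
    case True
    have "take (Suc m') xs = take m' xs @ [xs ! m']" using True by (simp add: take_Suc_conv_app_nth)
    moreover have "xs ! m' \<le> x" using assms True by auto
    ultimately show ?thesis using Suc by simp
  next
    case False
    hence "take (Suc m') xs = xs" "take m' xs = xs" by simp_all
    thus ?thesis using Suc assms(2) by simp
  qed
qed


lemma sub_le_take:
  fixes xs :: "real list"
  assumes "sorted_wrt (\<ge>) xs" "\<forall>a\<in>set xs. a \<ge> 0" "A \<subseteq># mset xs"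
  shows "sum_mset A \<le> sum_list (take (size A) xs)"
  using assms
proof (induction xs arbitrary: A)
  case Nil thus ?case by simp
next
  case (Cons x xs)
  have sx: "sorted_wrt (\<ge>) xs" "\<forall>a\<in>set xs. a \<ge> 0" using Cons.prems by auto
  show ?case
  proof (cases "x \<in># A")
    case True
    define A' where "A' = A - {#x#}"
    have A: "A = add_mset x A'" unfolding A'_def using True by simp
    have "A' \<subseteq># mset xs" using Cons.prems(3) unfolding A by simp
    hence "sum_mset A' \<le> sum_list (take (size A') xs)" using Cons.IH sx by blast
    thus ?thesis unfolding A by simp
  next
    case False
    have "A \<subseteq># mset xs" using Cons.prems(3) False
      by (simp add: inter_add_left1 subset_mset.inf.absorb_iff2)
    hence "sum_mset A \<le> sum_list (take (size A) xs)" using Cons.IH sx by blast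
    also have "\<dots> \<le> sum_list (take (size A) (x # xs))"
      by (rule take_sum_mono_cons) (use Cons.prems in auto)
    finally show ?thesis .
  qed
qed

lemma top_sum_split:
  fixes xs ys :: "real list"
  assumes "sorted_wrt (\<ge>) xs" "\<forall>a\<in>set xs. a \<ge> 0" "sorted_wrt (\<ge>) ys" "\<forall>a\<in>set ys. a \<ge> 0"
    and k: "k \<le> length xs + length ys"
  shows "\<exists>k1 k2. k1 \<le> length xs \<and> k2 \<le> length ys \<and> k1 + k2 = k \<and>
     sum_list (take k (rev (sort (xs @ ys)))) \<le> sum_list (take k1 xs) + sum_list (take k2 ys)"
proof -
  let ?zs = "rev (sort (xs @ ys))"
  define C where "C = mset (take k ?zs)"
  have tk: "mset (take k zs) \<subseteq># mset zs" for zs :: "real list"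
    by (metis append_take_drop_id mset_append mset_subset_eq_add_left)
  have Csub: "C \<subseteq># mset xs + mset ys"
    unfolding C_def using tk[of ?zs] by simp
  define A where "A = C \<inter># mset xs"
  define B where "B = C - A"
  have A: "A \<subseteq># mset xs" unfolding A_def by simp
  have B: "B \<subseteq># mset ys" unfolding B_def A_def using Csub
    by (metis diff_intersect_left_idem subset_eq_diff_conv add.commute)
  have AC: "A \<subseteq># C" unfolding A_def by simp
  have CAB: "C = A + B" unfolding B_def using AC by (metis subset_mset.add_diff_inverse)
  have sizeC: "size C = k" unfolding C_def using k by simp
  have "size A \<le> length xs" using A by (metis size_mset size_mset_mono)
  moreover have "size B \<le> length ys" using B by (metis size_mset size_mset_mono)
  moreover have "size A + size B = k" using sizeC CAB by simp
  moreover have "sum_list (take k ?zs) = sum_mset A + sum_mset B"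
    by (metis C_def CAB sum_mset.union sum_mset_sum_list)
  moreover have "sum_mset A \<le> sum_list (take (size A) xs)" using sub_le_take assms A by blast
  moreover have "sum_mset B \<le> sum_list (take (size B) ys)" using sub_le_take assms B by blast
  ultimately show ?thesis by (intro exI[of _ "size A"] exI[of _ "size B"]) auto
qed

lemma eigsum_union_le:
  assumes G: "wf_graph G" and H: "wf_graph H" and k: "k \<le> fst G + fst H"
  shows "\<exists>k1 k2. k1 \<le> fst G \<and> k2 \<le> fst H \<and> k1 + k2 = k \<and>
     lap_eigsum (disjoint_union G H) k \<le> lap_eigsum G k1 + lap_eigsum H k2"
  using top_sum_split[OF lap_eig_props(2,4)[OF G] lap_eig_props(2,4)[OF H], of k] k
  unfolding lap_eigsum_def lap_eig_union[OF G H] lap_eig_props(1)[OF G] lap_eig_props(1)[OF H]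
  by blast


definition tr :: "'a::comm_ring_1 mat \<Rightarrow> 'a" where
  "tr A = (\<Sum>i<dim_row A. A $$ (i,i))"

lemma tr_mat_delete:
  assumes A: "A \<in> carrier_mat (Suc m) (Suc m)" and i: "i < Suc m"
  shows "tr (mat_delete A i i) = tr A - A $$ (i,i)"
proof -
  have "tr (mat_delete A i i) = (\<Sum>k\<in>{0..<m}. A $$ (insert_index i k, insert_index i k))"
    unfolding tr_def mat_delete_def using A by (simp add: insert_index_def lessThan_atLeast0)
  also have "\<dots> = (\<Sum>j\<in>insert_index i ` {0..<m}. A $$ (j,j))"
    by (rule sum.reindex[symmetric, unfolded o_def]) (rule insert_index_inj_on)
  also have "insert_index i ` {0..<m} = {0..<Suc m} - {i}" by (rule insert_index_image[OF i])
  also have "(\<Sum>j\<in>{0..<Suc m} - {i}. A $$ (j,j)) = (\<Sum>j\<in>{0..<Suc m}. A $$ (j,j)) - A $$ (i,i)"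
    using i by (simp add: sum_diff1)
  also have "(\<Sum>j\<in>{0..<Suc m}. A $$ (j,j)) = tr A" unfolding tr_def using A by (simp add: lessThan_atLeast0)
  finally show ?thesis .
qed

lemma coeff_char_poly_trace:
  fixes A :: "'a::field_char_0 mat"
  assumes "A \<in> carrier_mat (Suc m) (Suc m)"
  shows "coeff (char_poly A) m = - tr A"
  using assms
proof (induction m arbitrary: A)
  case 0
  have ut: "upper_triangular A" using 0 unfolding upper_triangular_def by auto
  have "char_poly A = (\<Prod> a \<leftarrow> diag_mat A. [:- a, 1:])"
    by (rule char_poly_upper_triangular[OF 0 ut])
  also have "diag_mat A = [A $$ (0,0)]" using 0 unfolding diag_mat_def by (simp add: upt_rec)
  finally show ?case using 0 unfolding tr_def by simp
next
  case (Suc m)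
  note A = Suc.prems
  have "coeff (pderiv (char_poly A)) m = of_nat (Suc m) * coeff (char_poly A) (Suc m)"
    by (rule coeff_pderiv)
  also have "pderiv (char_poly A) = (\<Sum>i < Suc (Suc m). char_poly (mat_delete A i i))"
    by (rule pderiv_char_poly[OF A])
  finally have eq: "of_nat (Suc m) * coeff (char_poly A) (Suc m) = (\<Sum>i < Suc (Suc m). coeff (char_poly (mat_delete A i i)) m)"
    by (simp add: coeff_sum)
  have "coeff (char_poly (mat_delete A i i)) m = - (tr A - A $$ (i,i))" if i: "i < Suc (Suc m)" for i
  proof -
    have "mat_delete A i i \<in> carrier_mat (Suc m) (Suc m)" using mat_delete_carrier[OF A] by simp
    from Suc.IH[OF this] show ?thesis using tr_mat_delete[OF A i] by simp
  qed
  hence "(\<Sum>i < Suc (Suc m). coeff (char_poly (mat_delete A i i)) m) = (\<Sum>i < Suc (Suc m). - (tr A - A $$ (i,i)))"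
    by simp
  also have "\<dots> = - (of_nat (Suc (Suc m)) * tr A - tr A)"
    using A by (simp add: sum_subtractf sum_negf tr_def)
  also have "\<dots> = - (of_nat (Suc m) * tr A)" by (simp add: algebra_simps)
  finally have "of_nat (Suc m) * coeff (char_poly A) (Suc m) = of_nat (Suc m) * (- tr A)" using eq by simp
  moreover have "of_nat (Suc m) \<noteq> (0::'a)" by (rule of_nat_neq_0)
  ultimately show ?case using mult_left_cancel by blast
qed

lemma lead_coeff_lin_prod: "lead_coeff (lin_prod (xs :: 'a::idom list)) = 1"
  by (induction xs) (simp_all add: lead_coeff_mult del: mult_pCons_left)

lemma coeff_lin_prod_top: "coeff (lin_prod (xs :: 'a::idom list)) (length xs) = 1"
  using lead_coeff_lin_prod[of xs] degree_lin_prod[of xs] by simp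

lemma coeff_lin_prod_sum:
  fixes xs :: "'a::idom list"
  shows "coeff (lin_prod (x # xs)) (length xs) = - sum_list (x # xs)"
proof (induction xs arbitrary: x)
  case Nil thus ?case by simp
next
  case (Cons y ys)
  have "coeff (lin_prod (x # y # ys)) (length (y # ys)) = coeff ([:- x, 1:] * lin_prod (y # ys)) (Suc (length ys))"
    by simp
  also have "\<dots> = - x * coeff (lin_prod (y # ys)) (Suc (length ys)) + coeff (lin_prod (y # ys)) (length ys)"
    by (simp add: algebra_simps)
  also have "coeff (lin_prod (y # ys)) (Suc (length ys)) = 1"
    using coeff_lin_prod_top[of "y # ys"] by simp
  finally show ?case using Cons.IH[of y] by simp
qed


lemma eig_sum_trace:
  assumes wf: "wf_graph G"
  shows "sum_list (lap_eigenvalues G) = tr (laplacian G)"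
proof (cases "fst G")
  case 0
  hence "lap_eigenvalues G = []" using lap_eig_props(1)[OF wf] by simp
  thus ?thesis unfolding tr_def using 0 by simp
next
  case (Suc m)
  then obtain x xs where xs: "lap_eigenvalues G = x # xs" "length xs = m"
    using lap_eig_props(1)[OF wf] by (cases "lap_eigenvalues G") auto
  have "coeff (char_poly (laplacian G)) m = - tr (laplacian G)"
    by (rule coeff_char_poly_trace) (use Suc lap_carrier[of G] in simp)
  moreover have "coeff (char_poly (laplacian G)) m = - sum_list (x # xs)"
    unfolding lap_eig_props(3)[OF wf] xs(1) using coeff_lin_prod_sum[of x xs] xs(2) by simp
  ultimately show ?thesis using xs by simp
qed

lemma tr_lap: "tr (laplacian G) = (\<Sum>i<fst G. real (gdegree G i))"
  unfolding tr_def by (simp add: lap_index)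

lemma handshake:
  assumes wf: "wf_graph G"
  shows "(\<Sum>i<fst G. gdegree G i) = 2 * num_edges G"
proof -
  let ?n = "fst G" let ?E = "snd G"
  define P where "P = (SIGMA i:{..<?n}. {j. j < ?n \<and> ?E i j})"
  define P1 where "P1 = {(i,j). i < j \<and> j < ?n \<and> ?E i j}"
  define P2 where "P2 = {(i,j). j < i \<and> i < ?n \<and> ?E i j}"
  have "(\<Sum>i<?n. gdegree G i) = card P" unfolding P_def gdegree_def
    by (subst card_SigmaI) auto
  have fin: "finite P1" "finite P2"
  proof -
    have "P1 \<subseteq> {..<?n} \<times> {..<?n}" "P2 \<subseteq> {..<?n} \<times> {..<?n}" unfolding P1_def P2_def by auto
    thus "finite P1" "finite P2" using finite_subset by blast+
  qed
  have PU: "P = P1 \<union> P2" unfolding P_def P1_def P2_def using wf_irrefl[OF wf]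
    by auto (metis nat_neq_iff)
  have disj: "P1 \<inter> P2 = {}" unfolding P1_def P2_def by auto
  have swap: "P2 = prod.swap ` P1" unfolding P1_def P2_def using wf_sym[OF wf]
    by (auto simp: image_iff)
  have "card P2 = card P1" unfolding swap by (rule card_image) (auto simp: inj_on_def)
  moreover have "card P = card P1 + card P2" unfolding PU by (rule card_Un_disjoint[OF fin disj])
  moreover have "num_edges G = card P1" unfolding num_edges_def P1_def by simp
  ultimately show ?thesis using \<open>(\<Sum>i<?n. gdegree G i) = card P\<close> by simp
qed

lemma eig_total:
  assumes wf: "wf_graph G"
  shows "sum_list (lap_eigenvalues G) = 2 * real (num_edges G)"
proof -
  have "sum_list (lap_eigenvalues G) = (\<Sum>i<fst G. real (gdegree G i))"
    using eig_sum_trace[OF wf] tr_lap by simp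
  also have "\<dots> = real (\<Sum>i<fst G. gdegree G i)" by simp
  also have "\<dots> = 2 * real (num_edges G)" using handshake[OF wf] by simp
  finally show ?thesis .
qed

lemma eigsum_full:
  assumes wf: "wf_graph G" and k: "fst G \<le> k"
  shows "lap_eigsum G k = 2 * real (num_edges G)"
  unfolding lap_eigsum_def using eig_total[OF wf] lap_eig_props(1)[OF wf] k by simp


definition redm :: "'a::comm_ring_1 mat \<Rightarrow> 'a mat" where
  "redm A = mat (dim_row A - 1) (dim_row A - 1) (\<lambda>(i,j). A $$ (Suc i, Suc j) - A $$ (0, Suc j))"

lemma char_poly_rowsum0:
  fixes A :: "'a::idom mat"
  assumes A: "A \<in> carrier_mat (Suc m) (Suc m)"
    and rs: "\<And>i. i < Suc m \<Longrightarrow> (\<Sum>j<Suc m. A $$ (i,j)) = 0"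
  shows "char_poly A = [:0,1:] * char_poly (redm A)"
proof -
  define n where "n = Suc m"
  define P :: "'a mat" where "P = mat n n (\<lambda>(i,j). if j = 0 \<or> i = j then 1 else 0)"
  define Q :: "'a mat" where "Q = mat n n (\<lambda>(i,j). if i = j then 1 else if j = 0 then -1 else 0)"
  have A': "A \<in> carrier_mat n n" using A n_def by simp
  have Pc: "P \<in> carrier_mat n n" and Qc: "Q \<in> carrier_mat n n" unfolding P_def Q_def by auto
  have mm: "(X * Y) $$ (i,j) = (\<Sum>k<n. X $$ (i,k) * Y $$ (k,j))"
    if "X \<in> carrier_mat n n" "Y \<in> carrier_mat n n" "i < n" "j < n" for X Y :: "'a mat" and i j
    using that by (simp add: scalar_prod_def row_def col_def lessThan_atLeast0)
  have n0: "0 < n" unfolding n_def by simp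
  have PQ: "P * Q = 1\<^sub>m n"
  proof (rule eq_matI)
    fix i j assume "i < dim_row (1\<^sub>m n)" "j < dim_col (1\<^sub>m n)"
    hence i: "i < n" and j: "j < n" by auto
    have "(P * Q) $$ (i,j) = (\<Sum>k<n. P $$ (i,k) * Q $$ (k,j))" by (rule mm[OF Pc Qc i j])
    also have "\<dots> = (\<Sum>k<n. (if k = j then (if i = j then 1 else 0) else 0)
       + (if k = 0 then (if j = 0 \<and> i \<noteq> 0 then 1 else 0) else 0) + (if k = i then (if j = 0 \<and> i \<noteq> 0 then -1 else 0) else 0))"
      by (intro sum.cong refl) (use i j in \<open>auto simp: P_def Q_def\<close>)
    also have "\<dots> = (if i = j then 1 else 0)" using i j n0 by (simp add: sum.distrib)
    finally show "(P * Q) $$ (i,j) = 1\<^sub>m n $$ (i,j)" using i j by simp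
  qed (use Pc Qc in auto)
  have QP: "Q * P = 1\<^sub>m n"
  proof (rule eq_matI)
    fix i j assume "i < dim_row (1\<^sub>m n)" "j < dim_col (1\<^sub>m n)"
    hence i: "i < n" and j: "j < n" by auto
    have "(Q * P) $$ (i,j) = (\<Sum>k<n. Q $$ (i,k) * P $$ (k,j))" by (rule mm[OF Qc Pc i j])
    also have "\<dots> = (\<Sum>k<n. (if k = i then (if j = 0 \<or> i = j then 1 else 0) else 0)
       + (if k = 0 then (if i \<noteq> 0 \<and> j = 0 then -1 else 0) else 0))"
      by (intro sum.cong refl) (use i j in \<open>auto simp: P_def Q_def\<close>)
    also have "\<dots> = (if i = j then 1 else 0)" using i j n0 by (auto simp: sum.distrib)
    finally show "(Q * P) $$ (i,j) = 1\<^sub>m n $$ (i,j)" using i j by simp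
  qed (use Pc Qc in auto)
  define C where "C = Q * A * P"
  have Cc: "C \<in> carrier_mat n n" unfolding C_def using Pc Qc A' by auto
  have AP: "(A * P) $$ (i,j) = (if j = 0 then 0 else A $$ (i,j))" if i: "i < n" and j: "j < n" for i j
  proof -
    have "(A * P) $$ (i,j) = (\<Sum>k<n. A $$ (i,k) * P $$ (k,j))" by (rule mm[OF A' Pc i j])
    also have "\<dots> = (\<Sum>k<n. if j = 0 then A $$ (i,k) else (if k = j then A $$ (i,k) else 0))"
      by (intro sum.cong refl) (use j in \<open>auto simp: P_def\<close>)
    also have "\<dots> = (if j = 0 then 0 else A $$ (i,j))" using rs[of i] i j n_def by simp
    finally show ?thesis .
  qed
  have APc: "A * P \<in> carrier_mat n n" using A' Pc by auto
  have Cij: "C $$ (i,j) = (if i = 0 then (A * P) $$ (0,j) else (A * P) $$ (i,j) - (A * P) $$ (0,j))"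
    if i: "i < n" and j: "j < n" for i j
  proof -
    have "C $$ (i,j) = (Q * (A * P)) $$ (i,j)" unfolding C_def using Qc A' Pc by (simp add: assoc_mult_mat[of _ n n _ n _ n])
    also have "\<dots> = (\<Sum>k<n. Q $$ (i,k) * (A * P) $$ (k,j))" by (rule mm[OF Qc APc i j])
    also have "\<dots> = (\<Sum>k<n. (if k = i then (A * P) $$ (k,j) else 0) - (if k = 0 then (if i \<noteq> 0 then (A * P) $$ (0,j) else 0) else 0))"
      by (intro sum.cong refl) (use i in \<open>auto simp: Q_def\<close>)
    also have "\<dots> = (if i = 0 then (A * P) $$ (0,j) else (A * P) $$ (i,j) - (A * P) $$ (0,j))"
      using i n0 by (simp add: sum_subtractf)
    finally show ?thesis .
  qed
  have col0: "C $$ (i,0) = 0" if "i < n" for i using Cij[OF that n0] AP that n0 by simp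
  have sim: "similar_mat A C"
  proof (rule similar_matI[of A C P Q n])
    show "{A, C, P, Q} \<subseteq> carrier_mat n n" using A' Cc Pc Qc by auto
    show "P * Q = 1\<^sub>m n" by (rule PQ)
    show "Q * P = 1\<^sub>m n" by (rule QP)
    have "P * C * Q = (P * Q) * A * (P * Q)" unfolding C_def using Pc Qc A'
      by (simp add: assoc_mult_mat[of _ n n _ n _ n])
    also have "\<dots> = A" unfolding PQ using A' by simp
    finally show "A = P * C * Q" by simp
  qed
  have "char_poly A = char_poly C" by (rule char_poly_similar[OF sim])
  also have "\<dots> = monom 1 1 * char_poly (mat_delete C 0 0)"
    by (rule char_poly_0_column[OF col0 Cc n0])
  also have "mat_delete C 0 0 = redm A"
  proof (rule eq_matI)
    fix i j assume "i < dim_row (redm A)" "j < dim_col (redm A)"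
    hence i: "i < m" and j: "j < m" using A unfolding redm_def by auto
    show "mat_delete C 0 0 $$ (i, j) = redm A $$ (i, j)"
      using i j A Cc Cij[of "Suc i" "Suc j"] AP[of "Suc i" "Suc j"] AP[of 0 "Suc j"] n_def
      unfolding redm_def mat_delete_def by simp
  qed (use Cc A n_def in \<open>auto simp: redm_def\<close>)
  finally show ?thesis by (simp add: monom_altdef)
qed


lemma lin_prod_neg_shift:
  fixes c :: "'a::comm_ring_1"
  shows "(\<Prod>b\<leftarrow>bs. [:c - b, -1:]) = (-1)^length bs * lin_prod (map (\<lambda>b. c - b) bs)"
proof (induction bs)
  case Nil thus ?case by simp
next
  case (Cons b bs)
  have f: "[:c - b, -1:] = (-1) * [:- (c - b), 1:]" by simp
  have "(\<Prod>b\<leftarrow>b # bs. [:c - b, -1:]) = [:c - b, -1:] * (\<Prod>b\<leftarrow>bs. [:c - b, -1:])" by simp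
  also have "\<dots> = ((-1) * [:- (c - b), 1:]) * ((-1)^length bs * lin_prod (map (\<lambda>b. c - b) bs))"
    unfolding Cons.IH f ..
  also have "\<dots> = (-1)^length (b # bs) * ([:- (c - b), 1:] * lin_prod (map (\<lambda>b. c - b) bs))"
    by (simp only: length_Cons power_Suc ac_simps)
  also have "[:- (c - b), 1:] * lin_prod (map (\<lambda>b. c - b) bs) = lin_prod (map (\<lambda>b. c - b) (b # bs))"
    by (simp del: mult_pCons_left)
  finally show ?case .
qed

lemma char_poly_shift:
  fixes B :: "'a::idom mat"
  assumes B: "B \<in> carrier_mat m m" and cp: "char_poly B = lin_prod bs"
  shows "char_poly (c \<cdot>\<^sub>m 1\<^sub>m m - B) = lin_prod (map (\<lambda>b. c - b) bs)"
proof -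
  define h where "h = (\<lambda>p :: 'a poly. pcompose p [:c, -1:])"
  interpret h: comm_ring_hom h
    by unfold_locales (simp_all add: h_def pcompose_add pcompose_mult pcompose_1)
  have lb: "length bs = m" using degree_lin_prod[of bs] cp degree_monic_char_poly[OF B] by simp
  have "map_mat h (char_poly_matrix B) = (-1) \<cdot>\<^sub>m char_poly_matrix (c \<cdot>\<^sub>m 1\<^sub>m m - B)"
    by (rule eq_matI) (use B in \<open>auto simp: char_poly_matrix_def h_def pcompose_pCons one_pCons\<close>)
  hence "h (char_poly B) = det ((-1) \<cdot>\<^sub>m char_poly_matrix (c \<cdot>\<^sub>m 1\<^sub>m m - B))"
    unfolding char_poly_def by (metis h.hom_det)
  also have "\<dots> = (-1)^m * char_poly (c \<cdot>\<^sub>m 1\<^sub>m m - B)"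
  proof -
    have "dim_col (char_poly_matrix (c \<cdot>\<^sub>m 1\<^sub>m m - B)) = m" using B by (simp add: char_poly_matrix_def)
    thus ?thesis unfolding char_poly_def by simp
  qed
  finally have e1: "h (char_poly B) = (-1)^m * char_poly (c \<cdot>\<^sub>m 1\<^sub>m m - B)" .
  have "h (lin_prod bs) = (\<Prod>b\<leftarrow>bs. [:c - b, -1:])"
    unfolding h_def by (induction bs) (simp_all add: pcompose_mult pcompose_1 del: mult_pCons_left)
  also have "\<dots> = (-1)^m * lin_prod (map (\<lambda>b. c - b) bs)" using lin_prod_neg_shift lb by metis
  finally have e2: "h (char_poly B) = (-1)^m * lin_prod (map (\<lambda>b. c - b) bs)" using cp by simp
  from e1 e2 have "(-1)^m * char_poly (c \<cdot>\<^sub>m 1\<^sub>m m - B) = (-1)^m * lin_prod (map (\<lambda>b. c - b) bs)" by simp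
  moreover have "(-1)^m \<noteq> (0 :: 'a poly)" by simp
  ultimately show ?thesis using mult_left_cancel by blast
qed


lemma wf_complement: "wf_graph G \<Longrightarrow> wf_graph (complement G)"
  unfolding wf_graph_def complement_def by auto

lemma fst_complement[simp]: "fst (complement G) = fst G"
  unfolding complement_def by simp

lemma gdegree_complement:
  assumes wf: "wf_graph G" and i: "i < fst G"
  shows "gdegree (complement G) i = fst G - 1 - gdegree G i"
proof -
  let ?n = "fst G"
  have "{j. j < fst (complement G) \<and> snd (complement G) i j} = ({..<?n} - {i}) - {j. j < ?n \<and> snd G i j}"
    using i unfolding complement_def by auto
  moreover have "{j. j < ?n \<and> snd G i j} \<subseteq> {..<?n} - {i}" using wf_irrefl[OF wf] by auto
  moreover have "card ({..<?n} - {i}) = ?n - 1" using i by simp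
  ultimately show ?thesis unfolding gdegree_def by (simp add: card_Diff_subset)
qed

lemma gdegree_le:
  assumes wf: "wf_graph G" and i: "i < fst G"
  shows "gdegree G i \<le> fst G - 1"
proof -
  have "{j. j < fst G \<and> snd G i j} \<subseteq> {..<fst G} - {i}" using wf_irrefl[OF wf] by auto
  hence "gdegree G i \<le> card ({..<fst G} - {i})" unfolding gdegree_def by (intro card_mono) auto
  thus ?thesis using i by simp
qed

lemma lap_complement_entry:
  assumes wf: "wf_graph G" and i: "i < fst G" and j: "j < fst G"
  shows "laplacian (complement G) $$ (i,j) = (if i = j then real (fst G) else 0) - 1 - laplacian G $$ (i,j)"
proof -
  have "laplacian (complement G) $$ (i,j) = (if i = j then real (gdegree (complement G) i) else if snd (complement G) i j then -1 else 0)"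
    using lap_index[of i "complement G" j] i j by simp
  moreover have "real (gdegree (complement G) i) = real (fst G) - 1 - real (gdegree G i)"
    using gdegree_complement[OF wf i] gdegree_le[OF wf i] i by (simp add: of_nat_diff)
  ultimately show ?thesis using i j unfolding complement_def by (auto simp: lap_index)
qed

lemma lap_rowsum:
  assumes wf: "wf_graph G" and i: "i < fst G"
  shows "(\<Sum>j<fst G. laplacian G $$ (i,j)) = 0"
proof -
  have "(\<Sum>j<fst G. laplacian G $$ (i,j)) = (\<Sum>j<fst G. (if j = i then real (gdegree G i) else 0) - (if snd G i j then 1 else 0))"
    by (intro sum.cong refl) (auto simp: lap_index i wf_irrefl[OF wf])
  also have "\<dots> = real (gdegree G i) - (\<Sum>j<fst G. if snd G i j then 1 else 0)"
    using i by (simp add: sum_subtractf)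
  also have "\<dots> = 0" using gdegree_sum[of G i] by simp
  finally show ?thesis .
qed

lemma redm_complement:
  assumes wf: "wf_graph G" and n: "fst G = Suc m"
  shows "redm (laplacian (complement G)) = real (fst G) \<cdot>\<^sub>m 1\<^sub>m m - redm (laplacian G)"
proof (rule eq_matI)
  fix i j assume "i < dim_row (real (fst G) \<cdot>\<^sub>m 1\<^sub>m m - redm (laplacian G))"
      "j < dim_col (real (fst G) \<cdot>\<^sub>m 1\<^sub>m m - redm (laplacian G))"
  hence i: "i < m" and j: "j < m" using n by (auto simp: redm_def)
  show "redm (laplacian (complement G)) $$ (i, j) = (real (fst G) \<cdot>\<^sub>m 1\<^sub>m m - redm (laplacian G)) $$ (i, j)"
    using i j n lap_complement_entry[OF wf, of "Suc i" "Suc j"] lap_complement_entry[OF wf, of 0 "Suc j"]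
    unfolding redm_def by simp
qed (use n in \<open>auto simp: redm_def\<close>)

lemma sorted_last_le:
  fixes xs :: "'a::linorder list"
  assumes "sorted_wrt (\<ge>) xs" "x \<in> set xs"
  shows "last xs \<le> x"
proof -
  have "xs \<noteq> []" using assms by auto
  hence "xs = butlast xs @ [last xs]" by simp
  hence "sorted_wrt (\<ge>) (butlast xs @ [last xs])" using assms(1) by simp
  hence "\<forall>y\<in>set (butlast xs). last xs \<le> y" by (simp add: sorted_wrt_append)
  moreover have "x \<in> set (butlast xs) \<or> x = last xs" using assms(2) \<open>xs = butlast xs @ [last xs]\<close>
    by (metis in_set_butlast_appendI rotate1.simps(2) set_ConsD set_rotate1)
  ultimately show ?thesis by auto
qed


lemma lap_eig_complement:
  assumes wf: "wf_graph G" and n: "fst G = Suc m"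
  shows "lap_eigenvalues G = butlast (lap_eigenvalues G) @ [0]"
    and "lap_eigenvalues (complement G) = map (\<lambda>a. real (fst G) - a) (rev (butlast (lap_eigenvalues G))) @ [0]"
    and "\<forall>a\<in>set (lap_eigenvalues G). a \<le> real (fst G)"
proof -
  let ?xs = "lap_eigenvalues G" let ?bx = "butlast (lap_eigenvalues G)" let ?L = "laplacian G"
  let ?Gc = "complement G" let ?Lc = "laplacian (complement G)"
  let ?c = "real (fst G)"
  note props = lap_eig_props[OF wf]
  have cpL: "char_poly ?L = [:0,1:] * char_poly (redm ?L)"
    by (rule char_poly_rowsum0) (use n lap_rowsum[OF wf] in auto)
  have "poly (char_poly ?L) 0 = 0" unfolding cpL by simp
  hence "poly (lin_prod ?xs) 0 = 0" using props(3) by simp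
  hence "\<exists>p\<in>set (map (\<lambda>a. [:- a, 1:]) ?xs). poly p 0 = 0" using poly_prod_list_zero_iff by blast
  hence z: "0 \<in> set ?xs" by auto
  have ne: "?xs \<noteq> []" using z by auto
  have "last ?xs \<le> 0" using sorted_last_le[OF props(2) z] .
  moreover have "last ?xs \<ge> 0" using props(4) ne by auto
  ultimately have last0: "last ?xs = 0" by simp
  show xsdec: "?xs = ?bx @ [0]" using ne last0 by (metis append_butlast_last_id)
  have bxlen: "length ?bx = m" using props(1) n by simp
  have "[:0,1:] * char_poly (redm ?L) = [:0,1:] * lin_prod ?bx"
  proof -
    have "[:0,1:] * char_poly (redm ?L) = lin_prod (?bx @ [0])" using cpL props(3) xsdec by metis
    also have "\<dots> = [:0,1:] * lin_prod ?bx" by simp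
    finally show ?thesis .
  qed
  hence cpB: "char_poly (redm ?L) = lin_prod ?bx" using mult_left_cancel[of "[:0,1::real:]"] by simp
  have Bc: "redm ?L \<in> carrier_mat m m" unfolding redm_def using n by simp
  have cpBc: "char_poly (redm ?Lc) = lin_prod (map (\<lambda>b. ?c - b) ?bx)"
    unfolding redm_complement[OF wf n] by (rule char_poly_shift[OF Bc cpB])
  have cpLc: "char_poly ?Lc = [:0,1:] * char_poly (redm ?Lc)"
    by (rule char_poly_rowsum0) (use n lap_rowsum[OF wf_complement[OF wf]] in auto)
  define ys where "ys = map (\<lambda>a. ?c - a) (rev ?bx) @ [0]"
  have "char_poly ?Lc = lin_prod ys"
  proof -
    have "char_poly ?Lc = [:0,1:] * lin_prod (map (\<lambda>b. ?c - b) ?bx)" using cpLc cpBc by simp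
    also have "\<dots> = lin_prod (0 # map (\<lambda>b. ?c - b) ?bx)" by simp
    also have "\<dots> = lin_prod ys" unfolding ys_def by (rule lin_prod_mset) (simp add: rev_map)
    finally show ?thesis .
  qed
  hence "mset (lap_eigenvalues ?Gc) = mset ys"
    using lap_eig_props(3)[OF wf_complement[OF wf]] lin_prod_eq_mset by metis
  hence "set ys = set (lap_eigenvalues ?Gc)" by (metis set_mset_mset)
  hence ys0: "\<forall>a\<in>set ys. a \<ge> 0" using lap_eig_props(4)[OF wf_complement[OF wf]] by simp
  hence le: "\<forall>a\<in>set ?bx. a \<le> ?c" unfolding ys_def by auto
  show "\<forall>a\<in>set ?xs. a \<le> ?c"
  proof
    fix a assume "a \<in> set ?xs"
    hence "a \<in> set (?bx @ [0])" using xsdec by simp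
    hence "a \<in> set ?bx \<or> a = 0" by auto
    thus "a \<le> ?c" using le by auto
  qed
  have sbx: "sorted_wrt (\<ge>) ?bx" using props(2) xsdec by (metis sorted_wrt_append)
  have s1: "sorted_wrt (\<ge>) (map (\<lambda>a. ?c - a) (rev ?bx))"
    using sbx by (simp add: sorted_wrt_map sorted_wrt_rev)
  have s2: "\<forall>x\<in>set (map (\<lambda>a. ?c - a) (rev ?bx)). 0 \<le> x" using ys0 unfolding ys_def by simp
  have "sorted_wrt (\<ge>) ys" unfolding ys_def using s1 s2 by (simp add: sorted_wrt_append)
  thus "lap_eigenvalues ?Gc = map (\<lambda>a. ?c - a) (rev ?bx) @ [0]"
    using lap_eig_unique[OF _ \<open>char_poly ?Lc = lin_prod ys\<close> wf_complement[OF wf]] unfolding ys_def by simp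
qed


lemma sum_take_mono:
  fixes xs :: "real list"
  assumes "\<forall>a\<in>set xs. a \<ge> 0" "k \<le> k'"
  shows "sum_list (take k xs) \<le> sum_list (take k' xs)"
proof -
  have "take k' xs = take k xs @ take (k' - k) (drop k xs)"
    using assms(2) by (metis le_add_diff_inverse take_add)
  moreover have "sum_list (take (k' - k) (drop k xs)) \<ge> 0"
    using assms(1) by (intro sum_list_nonneg) (meson in_set_dropD in_set_takeD)
  ultimately show ?thesis by simp
qed

lemma sum_take_le_const:
  fixes xs :: "real list"
  assumes "\<forall>a\<in>set xs. a \<le> c" "c \<ge> 0"
  shows "sum_list (take k xs) \<le> real k * c"
  using assms
proof (induction xs arbitrary: k)
  case Nil thus ?case by simp
next
  case (Cons x xs)
  show ?case
  proof (cases k)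
    case 0 thus ?thesis by simp
  next
    case (Suc k')
    have "sum_list (take k' xs) \<le> real k' * c" using Cons by simp
    moreover have "x \<le> c" using Cons.prems by simp
    ultimately show ?thesis using Suc by (simp add: algebra_simps)
  qed
qed

lemma eigsum_nonneg: "wf_graph G \<Longrightarrow> lap_eigsum G k \<ge> 0"
  unfolding lap_eigsum_def using lap_eig_props(4) by (intro sum_list_nonneg) (meson in_set_takeD)

lemma eigsum_mono: "wf_graph G \<Longrightarrow> k \<le> k' \<Longrightarrow> lap_eigsum G k \<le> lap_eigsum G k'"
  unfolding lap_eigsum_def using lap_eig_props(4) sum_take_mono by blast

lemma eigsum_le_edges: "wf_graph G \<Longrightarrow> lap_eigsum G k \<le> 2 * real (num_edges G)"
  using eigsum_mono[of G k "max k (fst G)"] eigsum_full[of G "max k (fst G)"] by simp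

lemma eig_le_n: assumes wf: "wf_graph G" shows "\<forall>a\<in>set (lap_eigenvalues G). a \<le> real (fst G)"
proof (cases "fst G")
  case 0 thus ?thesis using lap_eig_props(1)[OF wf] by simp
next
  case (Suc m) thus ?thesis using lap_eig_complement(3)[OF wf Suc] by simp
qed

lemma eigsum_le_kn: "wf_graph G \<Longrightarrow> lap_eigsum G k \<le> real k * real (fst G)"
  unfolding lap_eigsum_def using eig_le_n sum_take_le_const by simp

lemma eigsum_last: "wf_graph G \<Longrightarrow> fst G = Suc m \<Longrightarrow> lap_eigsum G m = lap_eigsum G (Suc m)"
proof -
  assume wf: "wf_graph G" and n: "fst G = Suc m"
  have xs: "lap_eigenvalues G = butlast (lap_eigenvalues G) @ [0]" by (rule lap_eig_complement(1)[OF wf n])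
  have l: "length (butlast (lap_eigenvalues G)) = m" using lap_eig_props(1)[OF wf] n by simp
  show ?thesis unfolding lap_eigsum_def by (subst (1 2) xs) (simp add: l lap_eig_props(1)[OF wf] n)
qed

lemma eigsum_complement:
  assumes wf: "wf_graph G" and n: "fst G = Suc m" and k: "k \<le> m"
  shows "lap_eigsum (complement G) k = real k * real (Suc m) - 2 * real (num_edges G) + lap_eigsum G (m - k)"
proof -
  let ?xs = "lap_eigenvalues G" let ?bx = "butlast (lap_eigenvalues G)" let ?c = "real (Suc m)"
  have xs: "?xs = ?bx @ [0]" by (rule lap_eig_complement(1)[OF wf n])
  have l: "length ?bx = m" using lap_eig_props(1)[OF wf] n by simp
  have ys: "lap_eigenvalues (complement G) = map (\<lambda>a. ?c - a) (rev ?bx) @ [0]"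
    using lap_eig_complement(2)[OF wf n] n by simp
  have "take k (lap_eigenvalues (complement G)) = map (\<lambda>a. ?c - a) (take k (rev ?bx))"
    unfolding ys using k l by (simp add: take_map)
  hence "lap_eigsum (complement G) k = real k * ?c - sum_list (take k (rev ?bx))"
    unfolding lap_eigsum_def using k l by (simp add: sum_list_subtractf sum_list_triv)
  also have "take k (rev ?bx) = rev (drop (m - k) ?bx)" using l by (simp add: take_rev)
  also have "sum_list (rev (drop (m - k) ?bx)) = sum_list ?bx - sum_list (take (m - k) ?bx)"
  proof -
    have "sum_list ?bx = sum_list (take (m - k) ?bx) + sum_list (drop (m - k) ?bx)"
      by (subst append_take_drop_id[symmetric, of _ "m - k"], subst sum_list_append) simp
    thus ?thesis by simp
  qed
  also have "sum_list ?bx = 2 * real (num_edges G)"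
  proof -
    have "sum_list ?xs = sum_list ?bx" by (subst xs) simp
    thus ?thesis using eig_total[OF wf] by simp
  qed
  also have "take (m - k) ?bx = take (m - k) ?xs" using l by (subst xs) simp
  finally show ?thesis unfolding lap_eigsum_def by simp
qed

lemma edges_complement:
  assumes wf: "wf_graph G"
  shows "2 * real (num_edges (complement G)) = real (fst G) * (real (fst G) - 1) - 2 * real (num_edges G)"
proof (cases "fst G")
  case 0
  hence "num_edges G = 0" "num_edges (complement G) = 0" unfolding num_edges_def by auto
  thus ?thesis using 0 by simp
next
  case (Suc m)
  have "2 * real (num_edges (complement G)) = lap_eigsum (complement G) (Suc m)"
    using eigsum_full[OF wf_complement[OF wf], of "Suc m"] Suc by simp
  also have "\<dots> = lap_eigsum (complement G) m"
    using eigsum_last[OF wf_complement[OF wf], of m] Suc by simp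
  also have "\<dots> = real m * real (Suc m) - 2 * real (num_edges G) + lap_eigsum G 0"
    using eigsum_complement[OF wf Suc, of m] by simp
  finally show ?thesis using Suc by (simp add: lap_eigsum_def algebra_simps)
qed


lemma lap_iso:
  assumes wfG: "wf_graph G" and wfT: "wf_graph T" and n: "fst T = fst G"
    and p: "bij_betw p {..<fst G} {..<fst G}"
    and e: "\<forall>i<fst G. \<forall>j<fst G. snd G i j \<longleftrightarrow> snd T (p i) (p j)"
  shows "lap_eigenvalues G = lap_eigenvalues T"
proof -
  let ?n = "fst G"
  have pin: "p i < ?n" if "i < ?n" for i using p that by (auto simp: bij_betw_def)
  have pinj: "p i = p j \<longleftrightarrow> i = j" if "i < ?n" "j < ?n" for i j
    using p that by (auto simp: bij_betw_def inj_on_def)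
  have psurj: "\<exists>k<?n. p k = i" if "i < ?n" for i
    using p that by (auto simp: bij_betw_def image_iff) (metis imageE lessThan_iff that)
  have deg: "gdegree G i = gdegree T (p i)" if i: "i < ?n" for i
  proof -
    have "{j. j < fst T \<and> snd T (p i) j} = p ` {j. j < ?n \<and> snd G i j}"
    proof (intro Set.set_eqI iffI)
      fix x assume "x \<in> {j. j < fst T \<and> snd T (p i) j}"
      hence x: "x < ?n" "snd T (p i) x" using n by auto
      then obtain k where k: "k < ?n" "p k = x" using psurj by blast
      thus "x \<in> p ` {j. j < ?n \<and> snd G i j}" using x e i by auto
    next
      fix x assume "x \<in> p ` {j. j < ?n \<and> snd G i j}"
      then obtain k where "k < ?n" "snd G i k" "x = p k" by auto
      thus "x \<in> {j. j < fst T \<and> snd T (p i) j}" using e i pin n by auto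
    qed
    moreover have "inj_on p {j. j < ?n \<and> snd G i j}" using p by (auto simp: bij_betw_def inj_on_def)
    ultimately show ?thesis unfolding gdegree_def by (simp add: card_image)
  qed
  have Lent: "laplacian G $$ (i,j) = laplacian T $$ (p i, p j)" if "i < ?n" "j < ?n" for i j
    using that pin pinj deg e n by (auto simp: lap_index)
  define Pm :: "real mat" where "Pm = mat ?n ?n (\<lambda>(i,k). if k = p i then 1 else 0)"
  define Qm :: "real mat" where "Qm = mat ?n ?n (\<lambda>(k,i). if k = p i then 1 else 0)"
  have Pc: "Pm \<in> carrier_mat ?n ?n" and Qc: "Qm \<in> carrier_mat ?n ?n" unfolding Pm_def Qm_def by auto
  have LT: "laplacian T \<in> carrier_mat ?n ?n" using n lap_carrier[of T] by simp
  have LG: "laplacian G \<in> carrier_mat ?n ?n" by simp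
  have mm: "(X * Y) $$ (i,j) = (\<Sum>k<?n. X $$ (i,k) * Y $$ (k,j))"
    if "X \<in> carrier_mat ?n ?n" "Y \<in> carrier_mat ?n ?n" "i < ?n" "j < ?n" for X Y :: "real mat" and i j
    using that by (simp add: scalar_prod_def row_def col_def lessThan_atLeast0)
  have PQ: "Pm * Qm = 1\<^sub>m ?n"
  proof (rule eq_matI)
    fix i j assume "i < dim_row (1\<^sub>m ?n)" "j < dim_col (1\<^sub>m ?n)"
    hence i: "i < ?n" and j: "j < ?n" by auto
    have "(Pm * Qm) $$ (i,j) = (\<Sum>k<?n. if k = p i then (if p i = p j then 1 else 0) else 0)"
      unfolding mm[OF Pc Qc i j] by (intro sum.cong refl) (use i j in \<open>auto simp: Pm_def Qm_def\<close>)
    also have "\<dots> = (if i = j then 1 else 0)" using pin[OF i] pinj[OF i j] by simp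
    finally show "(Pm * Qm) $$ (i,j) = 1\<^sub>m ?n $$ (i,j)" using i j by simp
  qed (use Pc Qc in auto)
  have QP: "Qm * Pm = 1\<^sub>m ?n"
  proof (rule eq_matI)
    fix i j assume "i < dim_row (1\<^sub>m ?n)" "j < dim_col (1\<^sub>m ?n)"
    hence i: "i < ?n" and j: "j < ?n" by auto
    obtain k0 where k0: "k0 < ?n" "p k0 = i" using psurj[OF i] by blast
    have "(Qm * Pm) $$ (i,j) = (\<Sum>k<?n. if k = k0 then (if j = i then 1 else 0) else 0)"
      unfolding mm[OF Qc Pc i j] by (intro sum.cong refl) (use i j k0 pinj in \<open>auto simp: Pm_def Qm_def\<close>)
    also have "\<dots> = (if i = j then 1 else 0)" using k0 by auto
    finally show "(Qm * Pm) $$ (i,j) = 1\<^sub>m ?n $$ (i,j)" using i j by simp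
  qed (use Pc Qc in auto)
  have PLQ: "laplacian G = Pm * laplacian T * Qm"
  proof (rule eq_matI)
    fix i j assume "i < dim_row (Pm * laplacian T * Qm)" "j < dim_col (Pm * laplacian T * Qm)"
    hence i: "i < ?n" and j: "j < ?n" using Pc Qc by auto
    have PL: "(Pm * laplacian T) $$ (a,b) = laplacian T $$ (p a, b)" if a: "a < ?n" and b: "b < ?n" for a b
    proof -
      have "(Pm * laplacian T) $$ (a,b) = (\<Sum>k<?n. if k = p a then laplacian T $$ (k,b) else 0)"
        unfolding mm[OF Pc LT a b] by (intro sum.cong refl) (use a in \<open>auto simp: Pm_def\<close>)
      also have "\<dots> = laplacian T $$ (p a, b)" using pin[OF a] by simp
      finally show ?thesis .
    qed
    have PLc: "Pm * laplacian T \<in> carrier_mat ?n ?n" using Pc LT by auto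
    have "(Pm * laplacian T * Qm) $$ (i,j) = (\<Sum>k<?n. if k = p j then laplacian T $$ (p i, k) else 0)"
      unfolding mm[OF PLc Qc i j] by (intro sum.cong refl) (use i j PL in \<open>auto simp: Qm_def\<close>)
    also have "\<dots> = laplacian T $$ (p i, p j)" using pin[OF j] by simp
    finally show "laplacian G $$ (i,j) = (Pm * laplacian T * Qm) $$ (i,j)" using Lent[OF i j] by simp
  qed (use Pc Qc in auto)
  have sim: "similar_mat (laplacian G) (laplacian T)"
    by (rule similar_matI[OF _ PQ QP PLQ]) (use Pc Qc LT LG in auto)
  have "char_poly (laplacian G) = lin_prod (lap_eigenvalues T)"
    using char_poly_similar[OF sim] lap_eig_props(3)[OF wfT] by simp
  thus ?thesis using lap_eig_unique[OF lap_eig_props(2)[OF wfT] _ wfG] by simp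
qed

lemma eigsum_iso:
  assumes "is_threshold G" 
  shows "\<exists>T. threshold_canon T \<and> fst T = fst G \<and> wf_graph G \<and>
     (wf_graph T \<longrightarrow> lap_eigenvalues G = lap_eigenvalues T \<and> num_edges G = num_edges T)"
proof -
  obtain T p where T: "threshold_canon T" "fst T = fst G" "bij_betw p {..<fst G} {..<fst G}"
      "\<forall>i<fst G. \<forall>j<fst G. snd G i j \<longleftrightarrow> snd T (p i) (p j)" and wf: "wf_graph G"
    using assms unfolding is_threshold_def by blast
  have "wf_graph T \<longrightarrow> lap_eigenvalues G = lap_eigenvalues T \<and> num_edges G = num_edges T"
  proof
    assume wfT: "wf_graph T"
    have e: "lap_eigenvalues G = lap_eigenvalues T" by (rule lap_iso[OF wf wfT T(2,3,4)])
    have "2 * real (num_edges G) = 2 * real (num_edges T)"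
      using eig_total[OF wf] eig_total[OF wfT] e by simp
    thus "lap_eigenvalues G = lap_eigenvalues T \<and> num_edges G = num_edges T" using e by simp
  qed
  thus ?thesis using T wf by blast
qed


definition K1 :: graph where "K1 = (1, \<lambda>_ _. False)"

lemma wf_K1: "wf_graph K1" unfolding K1_def wf_graph_def by simp

lemma edges_K1: "num_edges K1 = 0" unfolding K1_def num_edges_def by simp

lemma K1_eig: "lap_eigenvalues K1 = [0]"
proof -
  have l: "length (lap_eigenvalues K1) = 1" using lap_eig_props(1)[OF wf_K1] unfolding K1_def by simp
  then obtain a where a: "lap_eigenvalues K1 = [a]" by (metis One_nat_def length_0_conv length_Suc_conv)
  have "sum_list (lap_eigenvalues K1) = 0" using eig_total[OF wf_K1] edges_K1 by simp
  thus ?thesis using a by simp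
qed

lemma union_K1_eig:
  assumes wf: "wf_graph X"
  shows "lap_eigenvalues (disjoint_union X K1) = lap_eigenvalues X @ [0]"
proof -
  have "lap_eigenvalues (disjoint_union X K1) = rev (sort (lap_eigenvalues X @ [0]))"
    using lap_eig_union[OF wf wf_K1] K1_eig by simp
  also have "\<dots> = lap_eigenvalues X @ [0]"
  proof (rule sorted_desc_unique)
    show "sorted_wrt (\<ge>) (rev (sort (lap_eigenvalues X @ [0])))" by (rule sorted_merge)
    show "sorted_wrt (\<ge>) (lap_eigenvalues X @ [0])"
      using lap_eig_props(2,4)[OF wf] by (simp add: sorted_wrt_append)
    show "mset (rev (sort (lap_eigenvalues X @ [0]))) = mset (lap_eigenvalues X @ [0])" by simp
  qed
  finally show ?thesis .
qed

lemma union_K1_eigsum: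
  assumes wf: "wf_graph X"
  shows "lap_eigsum (disjoint_union X K1) k = lap_eigsum X k"
proof -
  have z: "sum_list (take j [0::real]) = 0" for j by (cases j) auto
  show ?thesis unfolding lap_eigsum_def union_K1_eig[OF wf] by (simp add: take_append z)
qed

lemma wf_union_K1: "wf_graph X \<Longrightarrow> wf_graph (disjoint_union X K1)"
  using wf_union wf_K1 by blast

lemma fst_K1[simp]: "fst K1 = 1" unfolding K1_def by simp

lemma union_K1_edges:
  assumes wf: "wf_graph X"
  shows "num_edges (disjoint_union X K1) = num_edges X"
proof -
  have "2 * real (num_edges (disjoint_union X K1)) = lap_eigsum (disjoint_union X K1) (Suc (fst X))"
    using eigsum_full[OF wf_union_K1[OF wf], of "Suc (fst X)"] by simp
  also have "\<dots> = lap_eigsum X (Suc (fst X))" by (rule union_K1_eigsum[OF wf])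
  also have "\<dots> = 2 * real (num_edges X)" using eigsum_full[OF wf] by simp
  finally show ?thesis by simp
qed

lemma edges_bound:
  assumes wf: "wf_graph G"
  shows "2 * num_edges G \<le> fst G * (fst G - 1)"
proof -
  have "2 * real (num_edges (complement G)) \<ge> 0" by simp
  hence "2 * real (num_edges G) \<le> real (fst G) * (real (fst G) - 1)" using edges_complement[OF wf] by linarith
  moreover have "real (fst G) * (real (fst G) - 1) = real (fst G * (fst G - 1))"
    by (cases "fst G") (simp_all add: algebra_simps)
  ultimately have "real (2 * num_edges G) \<le> real (fst G * (fst G - 1))" by simp
  thus ?thesis by (simp only: of_nat_le_iff)
qed

lemma canon_wf: "threshold_canon T \<Longrightarrow> wf_graph T"
proof (induction rule: threshold_canon.induct)
  case empty thus ?case by (simp add: wf_graph_def)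
next
  case (add_isolated n E)
  show ?case unfolding wf_graph_def
  proof (intro allI impI)
    fix i j assume "snd (Suc n, E) i j"
    thus "i < fst (Suc n, E) \<and> j < fst (Suc n, E) \<and> i \<noteq> j \<and> snd (Suc n, E) j i"
      using add_isolated.IH unfolding wf_graph_def by fastforce
  qed
next
  case (add_dominating n E)
  show ?case unfolding wf_graph_def
  proof (intro allI impI)
    fix i j assume e: "snd (Suc n, \<lambda>i j. E i j \<or> (i = n \<and> j < n) \<or> (j = n \<and> i < n)) i j"
    show "i < fst (Suc n, \<lambda>i j. E i j \<or> (i = n \<and> j < n) \<or> (j = n \<and> i < n)) \<and>
       j < fst (Suc n, \<lambda>i j. E i j \<or> (i = n \<and> j < n) \<or> (j = n \<and> i < n)) \<and> i \<noteq> j \<and>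
       snd (Suc n, \<lambda>i j. E i j \<or> (i = n \<and> j < n) \<or> (j = n \<and> i < n)) j i"
    proof (cases "E i j")
      case True
      hence "i < n \<and> j < n \<and> i \<noteq> j \<and> E j i" using add_dominating.IH unfolding wf_graph_def by fastforce
      thus ?thesis by auto
    next
      case False thus ?thesis using e by auto
    qed
  qed
qed

lemma canon_is_threshold: "threshold_canon T \<Longrightarrow> is_threshold T"
proof -
  assume T: "threshold_canon T"
  have "T = (fst T, snd T)" by simp
  hence "threshold_canon (fst T, snd T)" using T by simp
  moreover have "bij_betw id {..<fst T} {..<fst T}" by simp
  ultimately show "is_threshold T" unfolding is_threshold_def using canon_wf[OF T]
    by (intro conjI exI[of _ "(fst T, snd T)"] exI[of _ id]) auto
qed

lemma canon_complement: "threshold_canon T \<Longrightarrow> threshold_canon (complement T)"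
proof (induction rule: threshold_canon.induct)
  case empty
  have "complement (0, \<lambda>_ _. False) = (0, \<lambda>_ _. False)" unfolding complement_def by auto
  thus ?case using threshold_canon.empty by simp
next
  case (add_isolated n E)
  have wf: "wf_graph (n, E)" using canon_wf[OF add_isolated.hyps] .
  have c: "complement (n, E) = (n, snd (complement (n, E)))" unfolding complement_def by simp
  have "complement (Suc n, E) = (Suc n, \<lambda>i j. snd (complement (n, E)) i j \<or> (i = n \<and> j < n) \<or> (j = n \<and> i < n))"
    using wf unfolding complement_def wf_graph_def by (auto simp: fun_eq_iff)
  thus ?case using threshold_canon.add_dominating[of n "snd (complement (n, E))"] add_isolated.IH c by simp
next
  case (add_dominating n E)
  have wf: "wf_graph (n, E)" using canon_wf[OF add_dominating.hyps] .
  have c: "complement (n, E) = (n, snd (complement (n, E)))" unfolding complement_def by simp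
  have "complement (Suc n, \<lambda>i j. E i j \<or> (i = n \<and> j < n) \<or> (j = n \<and> i < n)) = (Suc n, snd (complement (n, E)))"
    using wf unfolding complement_def wf_graph_def by (auto simp: fun_eq_iff)
  thus ?case using threshold_canon.add_isolated[of n "snd (complement (n, E))"] add_dominating.IH c by simp
qed

lemma is_threshold_complement:
  assumes "is_threshold G"
  shows "is_threshold (complement G)"
proof -
  obtain T p where T: "threshold_canon T" "fst T = fst G" "bij_betw p {..<fst G} {..<fst G}"
      "\<forall>i<fst G. \<forall>j<fst G. snd G i j \<longleftrightarrow> snd T (p i) (p j)" and wf: "wf_graph G"
    using assms unfolding is_threshold_def by blast
  have pin: "p i < fst G" if "i < fst G" for i using T(3) that by (auto simp: bij_betw_def)
  have pinj: "p i = p j \<longleftrightarrow> i = j" if "i < fst G" "j < fst G" for i j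
    using T(3) that by (auto simp: bij_betw_def inj_on_def)
  have "\<forall>i<fst G. \<forall>j<fst G. snd (complement G) i j \<longleftrightarrow> snd (complement T) (p i) (p j)"
    using T(2,4) pin pinj unfolding complement_def by auto
  moreover have "threshold_canon (complement T)" by (rule canon_complement[OF T(1)])
  moreover have "fst (complement T) = fst (complement G)" using T(2) by simp
  ultimately show ?thesis unfolding is_threshold_def using wf_complement[OF wf] T(3)
    by (intro conjI exI[of _ "complement T"] exI[of _ p]) auto
qed

lemma canon_iso_graph: "wf_graph (n, E) \<Longrightarrow> (Suc n, E) = disjoint_union (n, E) K1"
  unfolding disjoint_union_def K1_def wf_graph_def by (auto simp: fun_eq_iff)

lemma canon_dom_graph: "wf_graph (n, E) \<Longrightarrow>
   (Suc n, \<lambda>i j. E i j \<or> (i = n \<and> j < n) \<or> (j = n \<and> i < n)) = complement (disjoint_union (complement (n, E)) K1)"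
  unfolding disjoint_union_def K1_def wf_graph_def complement_def by (auto simp: fun_eq_iff; meson less_SucI)


lemma canon_iso_step:
  assumes T: "threshold_canon (n, E)"
  shows "lap_eigsum (Suc n, E) k = lap_eigsum (n, E) k" "num_edges (Suc n, E) = num_edges (n, E)"
  using canon_iso_graph[OF canon_wf[OF T]] union_K1_eigsum[OF canon_wf[OF T]] union_K1_edges[OF canon_wf[OF T]]
  by simp_all

lemma canon_dom_step:
  assumes T: "threshold_canon (n, E)"
  defines "E' \<equiv> \<lambda>i j. E i j \<or> (i = n \<and> j < n) \<or> (j = n \<and> i < n)"
  shows "num_edges (Suc n, E') = num_edges (n, E) + n"
    and "1 \<le> k \<Longrightarrow> k \<le> n \<Longrightarrow> lap_eigsum (Suc n, E') k = real (n + k) + lap_eigsum (n, E) (k - 1)"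
proof -
  let ?X = "(n, E)"
  have wfX: "wf_graph ?X" by (rule canon_wf[OF T])
  let ?Xc = "complement ?X"
  have wfXc: "wf_graph ?Xc" by (rule wf_complement[OF wfX])
  let ?U = "disjoint_union ?Xc K1"
  have wfU: "wf_graph ?U" by (rule wf_union_K1[OF wfXc])
  have fU: "fst ?U = Suc n" by simp
  have geq: "(Suc n, E') = complement ?U" unfolding E'_def by (rule canon_dom_graph[OF wfX])
  have eU: "num_edges ?U = num_edges ?Xc" by (rule union_K1_edges[OF wfXc])
  have eXc: "2 * real (num_edges ?Xc) = real n * (real n - 1) - 2 * real (num_edges ?X)"
    using edges_complement[OF wfX] by simp
  have "2 * real (num_edges (Suc n, E')) = real (Suc n) * (real (Suc n) - 1) - 2 * real (num_edges ?U)"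
    unfolding geq using edges_complement[OF wfU] fU by simp
  also have "\<dots> = 2 * real n + 2 * real (num_edges ?X)" using eU eXc by (simp add: algebra_simps)
  finally show "num_edges (Suc n, E') = num_edges (n, E) + n" by simp
  assume k1: "1 \<le> k" and kn: "k \<le> n"
  then obtain m' where n: "n = Suc m'" by (cases n) auto
  have "lap_eigsum (Suc n, E') k = real k * real (Suc n) - 2 * real (num_edges ?U) + lap_eigsum ?U (n - k)"
    unfolding geq by (rule eigsum_complement[OF wfU fU kn])
  also have "lap_eigsum ?U (n - k) = lap_eigsum ?Xc (n - k)" by (rule union_K1_eigsum[OF wfXc])
  also have "lap_eigsum ?Xc (n - k) = real (n - k) * real (Suc m') - 2 * real (num_edges ?X) + lap_eigsum ?X (m' - (n - k))"
    by (rule eigsum_complement[OF wfX]) (use n k1 in simp_all)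
  also have "m' - (n - k) = k - 1" using n k1 kn by simp
  finally show "lap_eigsum (Suc n, E') k = real (n + k) + lap_eigsum (n, E) (k - 1)"
    using eU eXc n kn by (simp add: of_nat_diff algebra_simps)
qed

lemma eigsum_zero[simp]: "lap_eigsum G 0 = 0" unfolding lap_eigsum_def by simp

lemma canon_brouwer:
  assumes "threshold_canon T"
  shows "2 * lap_eigsum T k \<le> 2 * real (num_edges T) + real k * (real k + 1)"
  using assms
proof (induction arbitrary: k rule: threshold_canon.induct)
  case empty
  have "lap_eigsum (0, \<lambda>_ _. False) k = 0"
    using lap_eig_props(1)[OF canon_wf[OF threshold_canon.empty]] unfolding lap_eigsum_def by simp
  thus ?case by simp
next
  case (add_isolated n E)
  thus ?case using canon_iso_step[OF add_isolated.hyps] by simp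
next
  case (add_dominating n E)
  let ?E' = "\<lambda>i j. E i j \<or> (i = n \<and> j < n) \<or> (j = n \<and> i < n)"
  have T': "threshold_canon (Suc n, ?E')" using threshold_canon.add_dominating[OF add_dominating.hyps] .
  have ed: "num_edges (Suc n, ?E') = num_edges (n, E) + n" using canon_dom_step(1)[OF add_dominating.hyps] by simp
  show ?case
  proof (cases "k = 0")
    case True thus ?thesis by simp
  next
    case False
    show ?thesis
    proof (cases "k \<le> n")
      case True
      have "lap_eigsum (Suc n, ?E') k = real (n + k) + lap_eigsum (n, E) (k - 1)"
        using canon_dom_step(2)[OF add_dominating.hyps, of k] False True by simp
      moreover have "2 * lap_eigsum (n, E) (k - 1) \<le> 2 * real (num_edges (n, E)) + real (k - 1) * (real (k - 1) + 1)"
        by (rule add_dominating.IH)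
      ultimately show ?thesis using ed False by (simp add: of_nat_diff algebra_simps)
    next
      case kn: False
      have "lap_eigsum (Suc n, ?E') k \<le> 2 * real (num_edges (Suc n, ?E'))" by (rule eigsum_le_edges[OF canon_wf[OF T']])
      moreover have "2 * num_edges (Suc n, ?E') \<le> Suc n * n" using edges_bound[OF canon_wf[OF T']] by simp
      moreover have "Suc n * n \<le> k * (k + 1)" using kn by (intro mult_le_mono) auto
      ultimately have "2 * num_edges (Suc n, ?E') \<le> k * (k + 1)" by linarith
      hence "real (2 * num_edges (Suc n, ?E')) \<le> real (k * (k + 1))" by (simp only: of_nat_le_iff)
      hence "2 * real (num_edges (Suc n, ?E')) \<le> real k * (real k + 1)" by (simp add: algebra_simps)
      thus ?thesis using \<open>lap_eigsum (Suc n, ?E') k \<le> 2 * real (num_edges (Suc n, ?E'))\<close> by linarith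
    qed
  qed
qed


lemma even_gap: "even (a::nat) \<Longrightarrow> even b \<Longrightarrow> a < b \<Longrightarrow> a + 2 \<le> b"
  by (elim evenE) auto

lemma even_prod_pred: "even ((N::nat) * (N - 1))"
  by (cases N) auto

lemma even_prod_succ: "even ((k::nat) * (k + 1))"
  by auto

lemma nn_bound: "2 * (N::nat) \<le> N * (N - 1) + 2"
proof (cases N)
  case 0 thus ?thesis by simp
next
  case (Suc m)
  show ?thesis
  proof (cases m)
    case 0 thus ?thesis using Suc by simp
  next
    case (Suc l)
    hence "2 * m \<le> Suc m * m" by (intro mult_le_mono) auto
    thus ?thesis using \<open>N = Suc m\<close> by simp
  qed
qed

lemma arith_choice:
  fixes N M k :: nat
  assumes k1: "1 \<le> k" and kN: "k \<le> N" and MN: "2*M \<le> (N+1)*N"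
  defines "G2 \<equiv> min (4*M) (min (2*M + k*(k+1)) (2*k*(N+1)))"
  shows "(2*M \<le> N*(N-1) \<and> G2 \<le> 2*k*N) \<or> (N \<le> M \<and> G2 + 2*N \<le> 4*M + 2*k)"
proof (cases "2*M \<le> N*(N-1)")
  case small: True
  show ?thesis
  proof (cases "G2 \<le> 2*k*N")
    case True thus ?thesis using small by blast
  next
    case False
    hence lt: "2*k*N < G2" by simp
    have "G2 \<le> 4*M" "G2 \<le> 2*M + k*(k+1)" unfolding G2_def by auto
    hence c1: "2*k*N < 4*M" and c2: "2*k*N < 2*M + k*(k+1)" using lt by linarith+
    have kN1: "k \<le> N - 1"
    proof (rule ccontr)
      assume "\<not> k \<le> N - 1"
      hence "k = N" using kN by simp
      hence "N * N < 2 * M" using c1 by simp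
      moreover have "N*(N-1) \<le> N * N" by simp
      ultimately show False using small by linarith
    qed
    have c2': "2*k*N + 2 \<le> 2*M + k*(k+1)"
      by (rule even_gap[OF _ _ c2]) (auto simp: even_prod_succ)
    define n where "n = int N" define kk where "kk = int k" define mm where "mm = int M"
    have "int (2*k*N + 2) \<le> int (2*M + k*(k+1))" using c2' by (simp only: of_nat_le_iff)
    hence h2: "2*kk*n + 2 \<le> 2*mm + kk*(kk+1)" unfolding n_def kk_def mm_def by (simp add: algebra_simps)
    have hk1: "1 \<le> kk" and hkn: "kk \<le> n - 1" using k1 kN1 kN unfolding kk_def n_def by auto
    have F2: "(kk - 1) * (n - kk - 1) \<ge> 0" using hk1 hkn by simp
    have F3: "(kk - 1) * (2*n - kk - 2) \<ge> 0" using hk1 hkn by simp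
    have "mm \<ge> n" using h2 F3 by (simp add: algebra_simps)
    hence r1: "N \<le> M" unfolding n_def mm_def by simp
    have "2*mm \<ge> kk*(kk - 1) + 2*n" using h2 F2 by (simp add: algebra_simps)
    hence "int (2*M + k*(k+1) + 2*N) \<le> int (4*M + 2*k)" unfolding n_def mm_def kk_def
      by (simp add: algebra_simps)
    hence "2*M + k*(k+1) + 2*N \<le> 4*M + 2*k" by (simp only: of_nat_le_iff)
    moreover have "G2 \<le> 2*M + k*(k+1)" unfolding G2_def by simp
    ultimately show ?thesis using r1 by auto
  qed
next
  case big: False
  have c: "N*(N-1) + 2 \<le> 2*M"
    by (rule even_gap) (use big even_prod_pred in auto)
  have r1: "N \<le> M" using c nn_bound[of N] by linarith
  show ?thesis
  proof (cases "k = N")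
    case True
    have "G2 \<le> 4*M" unfolding G2_def by simp
    thus ?thesis using r1 True by simp
  next
    case False
    hence kN1: "k \<le> N - 1" using kN by simp
    have "k*(k-1) \<le> (N-1)*(N-2)" using kN1 by (intro mult_le_mono) auto
    define n where "n = int N" define kk where "kk = int k" define mm where "mm = int M"
    have hk1: "1 \<le> kk" and hkn: "kk \<le> n - 1" using k1 kN1 kN unfolding kk_def n_def by auto
    have F4: "kk*(kk - 1) \<le> (n-1)*(n-2)" using hk1 hkn by (intro mult_mono) auto
    have "int (N*(N-1) + 2) \<le> int (2*M)" using c by (simp only: of_nat_le_iff)
    hence hc: "n*(n-1) + 2 \<le> 2*mm" using kN k1 unfolding n_def mm_def by (simp add: of_nat_diff)
    have "kk*(kk-1) + 2*n \<le> 2*mm" using hc F4 by (simp add: algebra_simps)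
    hence "int (2*M + k*(k+1) + 2*N) \<le> int (4*M + 2*k)" unfolding n_def mm_def kk_def
      by (simp add: algebra_simps)
    hence "2*M + k*(k+1) + 2*N \<le> 4*M + 2*k" by (simp only: of_nat_le_iff)
    moreover have "G2 \<le> 2*M + k*(k+1)" unfolding G2_def by simp
    ultimately show ?thesis using r1 by auto
  qed
qed


definition g2 :: "nat \<Rightarrow> nat \<Rightarrow> nat \<Rightarrow> real" where
  "g2 N M k = min (4 * real M) (min (2 * real M + real k * (real k + 1)) (2 * real k * real N))"

lemma canon_pair: "threshold_canon T \<Longrightarrow> threshold_canon (fst T, snd T)" by simp

lemma lower:
  "2 * M \<le> N * (N - 1) \<Longrightarrow> k \<le> N \<Longrightarrow>
   \<exists>E. threshold_canon (N, E) \<and> num_edges (N, E) = M \<and> g2 N M k \<le> 2 * lap_eigsum (N, E) k"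
proof (induction N arbitrary: M k)
  case 0
  hence "M = 0" "k = 0" by auto
  moreover have "num_edges (0, \<lambda>_ _. False) = 0" unfolding num_edges_def by simp
  ultimately show ?case using threshold_canon.empty by (auto simp: g2_def intro!: exI[of _ "\<lambda>_ _. False"])
next
  case (Suc N)
  have MN: "2 * M \<le> (N + 1) * N" using Suc.prems(1) by simp
  have iso: "\<exists>E. threshold_canon (Suc N, E) \<and> num_edges (Suc N, E) = M \<and> lap_eigsum (Suc N, E) k' = lap_eigsum (N, E') k'"
    if "threshold_canon (N, E')" "num_edges (N, E') = M" for E' k'
    using canon_iso_step[OF that(1)] threshold_canon.add_isolated[OF that(1)] that(2) by blast
  have dom: "\<exists>E. threshold_canon (Suc N, E) \<and> num_edges (Suc N, E) = M' + N \<and>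
      (1 \<le> k' \<longrightarrow> k' \<le> N \<longrightarrow> lap_eigsum (Suc N, E) k' = real (N + k') + lap_eigsum (N, E') (k' - 1))"
    if "threshold_canon (N, E')" "num_edges (N, E') = M'" for E' k' M'
    using canon_dom_step[OF that(1)] threshold_canon.add_dominating[OF that(1)] that(2) by blast
  have ex: "\<exists>E. threshold_canon (Suc N, E) \<and> num_edges (Suc N, E) = M"
  proof (cases "2 * M \<le> N * (N - 1)")
    case True
    obtain E' where "threshold_canon (N, E')" "num_edges (N, E') = M" using Suc.IH[OF True, of 0] by auto
    thus ?thesis using iso by blast
  next
    case False
    have c: "N*(N-1) + 2 \<le> 2*M" by (rule even_gap) (use False even_prod_pred in auto)
    have NM: "N \<le> M" using c nn_bound[of N] by linarith
    have "2 * (M - N) \<le> N * (N - 1)" using MN NM by (cases N) (auto simp: algebra_simps)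
    then obtain E' where "threshold_canon (N, E')" "num_edges (N, E') = M - N" using Suc.IH[of "M - N" 0] by auto
    thus ?thesis using dom[of E' "M - N"] NM by auto
  qed
  show ?case
  proof (cases "k = 0 \<or> k = Suc N")
    case True
    obtain E where E: "threshold_canon (Suc N, E)" "num_edges (Suc N, E) = M" using ex by blast
    have "g2 (Suc N) M k \<le> 2 * lap_eigsum (Suc N, E) k"
    proof (cases "k = 0")
      case True thus ?thesis by (simp add: g2_def)
    next
      case False
      hence "k = Suc N" using \<open>k = 0 \<or> k = Suc N\<close> by simp
      hence "lap_eigsum (Suc N, E) k = 2 * real M" using eigsum_full[OF canon_wf[OF E(1)]] E(2) by simp
      thus ?thesis by (simp add: g2_def)
    qed
    thus ?thesis using E by blast
  next
    case False
    hence k1: "1 \<le> k" and kN: "k \<le> N" using Suc.prems(2) by auto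
    let ?G2 = "min (4*M) (min (2*M + k*(k+1)) (2*k*(N+1)))"
    have rG2: "real ?G2 = g2 (Suc N) M k" unfolding g2_def by (simp add: of_nat_min algebra_simps)
    have G2r: "g2 (Suc N) M k \<le> 4 * real M" "g2 (Suc N) M k \<le> 2 * real M + real k * (real k + 1)"
        "g2 (Suc N) M k \<le> 2 * real k * (real N + 1)"
      unfolding g2_def by (auto simp: algebra_simps)
    from arith_choice[OF k1 kN MN]
    show ?thesis
    proof (elim disjE conjE)
      assume sm: "2*M \<le> N*(N-1)" and c: "?G2 \<le> 2*k*N"
      obtain E' where E': "threshold_canon (N, E')" "num_edges (N, E') = M" "g2 N M k \<le> 2 * lap_eigsum (N, E') k"
        using Suc.IH[OF sm kN] by blast
      obtain E where E: "threshold_canon (Suc N, E)" "num_edges (Suc N, E) = M" "lap_eigsum (Suc N, E) k = lap_eigsum (N, E') k"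
        using iso[OF E'(1,2)] by blast
      have "real ?G2 \<le> real (2*k*N)" using c by (simp only: of_nat_le_iff)
      hence "g2 (Suc N) M k \<le> 2 * real k * real N" unfolding rG2 by simp
      hence "g2 (Suc N) M k \<le> g2 N M k" using G2r unfolding g2_def by simp
      thus ?thesis using E E'(3) by auto
    next
      assume NM: "N \<le> M" and c: "?G2 + 2*N \<le> 4*M + 2*k"
      have sm: "2 * (M - N) \<le> N * (N - 1)" using MN NM by (cases N) (auto simp: algebra_simps)
      obtain E' where E': "threshold_canon (N, E')" "num_edges (N, E') = M - N" "g2 N (M - N) (k - 1) \<le> 2 * lap_eigsum (N, E') (k - 1)"
      proof -
        have "k - 1 \<le> N" using kN by simp
        from Suc.IH[OF sm this] show ?thesis using that by blast
      qed
      obtain E where E: "threshold_canon (Suc N, E)" "num_edges (Suc N, E) = M - N + N"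
          "lap_eigsum (Suc N, E) k = real (N + k) + lap_eigsum (N, E') (k - 1)"
        using dom[OF E'(1,2), of k] k1 kN by blast
      have "real (?G2 + 2*N) \<le> real (4*M + 2*k)" using c by (simp only: of_nat_le_iff)
      hence c': "g2 (Suc N) M k \<le> 4 * real M + 2 * real k - 2 * real N" unfolding rG2[symmetric] by simp
      have rMN: "real (M - N) = real M - real N" using NM by (simp add: of_nat_diff)
      have rk: "real (k - 1) = real k - 1" using k1 by (simp add: of_nat_diff)
      have eq: "g2 N (M - N) (k - 1) = min (4*(real M - real N)) (min (2*(real M - real N) + (real k - 1)*real k) (2*(real k - 1)*real N))"
        unfolding g2_def rMN rk by (simp add: algebra_simps)
      have "g2 (Suc N) M k \<le> 2 * real (N + k) + g2 N (M - N) (k - 1)"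
        unfolding eq using c' G2r by (simp add: min_def algebra_simps)
      thus ?thesis using E E'(3) NM by auto
    qed
  qed
qed


lemma threshold_brouwer:
  assumes "is_threshold T"
  shows "2 * lap_eigsum T k \<le> 2 * real (num_edges T) + real k * (real k + 1)"
proof -
  obtain T' where T': "threshold_canon T'" "fst T' = fst T" "wf_graph T"
     "wf_graph T' \<longrightarrow> lap_eigenvalues T = lap_eigenvalues T' \<and> num_edges T = num_edges T'"
    using eigsum_iso[OF assms] by blast
  hence e: "lap_eigenvalues T = lap_eigenvalues T'" "num_edges T = num_edges T'" using canon_wf by auto
  have "lap_eigsum T k = lap_eigsum T' k" unfolding lap_eigsum_def e ..
  thus ?thesis using canon_brouwer[OF T'(1), of k] e by simp
qed

lemma STD_bound:
  assumes wf: "wf_graph G" and std: "spectrally_threshold_dominated G" and k: "k \<le> fst G"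
  shows "2 * lap_eigsum G k \<le> 2 * real (num_edges G) + real k * (real k + 1)"
proof (cases "k = 0")
  case True thus ?thesis by simp
next
  case False
  then obtain T where T: "is_threshold T" "fst T = fst G" "num_edges T = num_edges G" "lap_eigsum T k \<ge> lap_eigsum G k"
    using std k unfolding spectrally_threshold_dominated_def by fastforce
  thus ?thesis using threshold_brouwer[OF T(1), of k] by simp
qed

lemma edges_union:
  assumes G: "wf_graph G" and H: "wf_graph H"
  shows "num_edges (disjoint_union G H) = num_edges G + num_edges H"
proof -
  have "2 * real (num_edges (disjoint_union G H)) = sum_list (lap_eigenvalues (disjoint_union G H))"
    using eig_total[OF wf_union[OF G H]] by simp
  also have "\<dots> = sum_list (lap_eigenvalues G) + sum_list (lap_eigenvalues H)"
    unfolding lap_eig_union[OF G H] by (simp add: sum_mset_sum_list[symmetric])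
  also have "\<dots> = 2 * real (num_edges G) + 2 * real (num_edges H)" using eig_total G H by simp
  finally show ?thesis by simp
qed

lemma union_STD:
  assumes G: "wf_graph G" and H: "wf_graph H"
    and sG: "spectrally_threshold_dominated G" and sH: "spectrally_threshold_dominated H"
  shows "spectrally_threshold_dominated (disjoint_union G H)"
  unfolding spectrally_threshold_dominated_def
proof
  fix k assume "k \<in> {1..fst (disjoint_union G H)}"
  hence kN: "k \<le> fst G + fst H" by simp
  let ?U = "disjoint_union G H"
  let ?N = "fst G + fst H" let ?M = "num_edges G + num_edges H"
  obtain k1 k2 where kk: "k1 \<le> fst G" "k2 \<le> fst H" "k1 + k2 = k"
     "lap_eigsum ?U k \<le> lap_eigsum G k1 + lap_eigsum H k2"
    using eigsum_union_le[OF G H kN] by blast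
  have eU: "num_edges ?U = ?M" by (rule edges_union[OF G H])
  have b1: "2 * lap_eigsum G k1 \<le> 4 * real (num_edges G)" using eigsum_le_edges[OF G, of k1] by simp
  have b2: "2 * lap_eigsum H k2 \<le> 4 * real (num_edges H)" using eigsum_le_edges[OF H, of k2] by simp
  have b3: "2 * lap_eigsum G k1 \<le> 2 * real (num_edges G) + real k1 * (real k1 + 1)" by (rule STD_bound[OF G sG kk(1)])
  have b4: "2 * lap_eigsum H k2 \<le> 2 * real (num_edges H) + real k2 * (real k2 + 1)" by (rule STD_bound[OF H sH kk(2)])
  have b5: "lap_eigsum G k1 \<le> real k1 * real (fst G)" by (rule eigsum_le_kn[OF G])
  have b6: "lap_eigsum H k2 \<le> real k2 * real (fst H)" by (rule eigsum_le_kn[OF H])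
  have rk: "real k = real k1 + real k2" using kk(3) by simp
  have p1: "real k1 * (real k1 + 1) + real k2 * (real k2 + 1) \<le> real k * (real k + 1)"
  proof -
    have "real k * (real k + 1) = real k1 * (real k1 + 1) + real k2 * (real k2 + 1) + 2 * real k1 * real k2"
      unfolding rk by (simp add: algebra_simps)
    thus ?thesis by simp
  qed
  have p2: "real k1 * real (fst G) + real k2 * real (fst H) \<le> real k * real ?N"
  proof -
    have "real k * real ?N = real k1 * real (fst G) + real k2 * real (fst H) + real k1 * real (fst H) + real k2 * real (fst G)"
      unfolding rk by (simp add: algebra_simps)
    thus ?thesis by simp
  qed
  have up: "2 * lap_eigsum ?U k \<le> g2 ?N ?M k"
    unfolding g2_def using kk(4) b1 b2 b3 b4 b5 b6 p1 p2 by (simp add: algebra_simps)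
  have "2 * ?M \<le> ?N * (?N - 1)" using edges_bound[OF wf_union[OF G H]] eU by simp
  then obtain E where E: "threshold_canon (?N, E)" "num_edges (?N, E) = ?M" "g2 ?N ?M k \<le> 2 * lap_eigsum (?N, E) k"
    using lower kN by blast
  show "\<exists>T. is_threshold T \<and> fst T = fst ?U \<and> num_edges T = num_edges ?U \<and> lap_eigsum ?U k \<le> lap_eigsum T k"
    using E up eU canon_is_threshold[OF E(1)] by (intro exI[of _ "(?N, E)"]) auto
qed

lemma complement_STD:
  assumes wf: "wf_graph G" and sG: "spectrally_threshold_dominated G"
  shows "spectrally_threshold_dominated (complement G)"
  unfolding spectrally_threshold_dominated_def
proof
  fix k assume "k \<in> {1..fst (complement G)}"
  hence k1: "1 \<le> k" and kn: "k \<le> fst G" by auto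
  then obtain m where n: "fst G = Suc m" by (cases "fst G") auto
  have pick: "\<exists>T. is_threshold T \<and> fst T = fst G \<and> num_edges T = num_edges G \<and> lap_eigsum G j \<le> lap_eigsum T j"
    if "j \<le> fst G" for j
  proof (cases "j = 0")
    case True
    obtain T where "is_threshold T" "fst T = fst G" "num_edges T = num_edges G"
      using sG n unfolding spectrally_threshold_dominated_def by fastforce
    thus ?thesis using True by (intro exI[of _ T]) auto
  next
    case False thus ?thesis using sG that unfolding spectrally_threshold_dominated_def by auto
  qed
  define j where "j = (if k \<le> m then m - k else 0)"
  have jn: "j \<le> fst G" unfolding j_def using n by auto
  obtain T where T: "is_threshold T" "fst T = fst G" "num_edges T = num_edges G" "lap_eigsum G j \<le> lap_eigsum T j"
    using pick[OF jn] by blast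
  have wfT: "wf_graph T" using T(1) unfolding is_threshold_def by simp
  have nT: "fst T = Suc m" using T(2) n by simp
  have ec: "num_edges (complement T) = num_edges (complement G)"
  proof -
    have "2 * real (num_edges (complement T)) = 2 * real (num_edges (complement G))"
      using edges_complement[OF wf] edges_complement[OF wfT] T(2,3) by simp
    thus ?thesis by simp
  qed
  have "lap_eigsum (complement G) k \<le> lap_eigsum (complement T) k"
  proof (cases "k \<le> m")
    case True
    have "lap_eigsum (complement G) k = real k * real (Suc m) - 2 * real (num_edges G) + lap_eigsum G (m - k)"
      by (rule eigsum_complement[OF wf n True])
    moreover have "lap_eigsum (complement T) k = real k * real (Suc m) - 2 * real (num_edges T) + lap_eigsum T (m - k)"
      by (rule eigsum_complement[OF wfT nT True])
    ultimately show ?thesis using T(3,4) True unfolding j_def by simp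
  next
    case False
    hence "k = Suc m" using kn n by simp
    thus ?thesis using eigsum_full[OF wf_complement[OF wf], of k] eigsum_full[OF wf_complement[OF wfT], of k] n nT ec
      by simp
  qed
  thus "\<exists>T. is_threshold T \<and> fst T = fst (complement G) \<and> num_edges T = num_edges (complement G) \<and>
      lap_eigsum (complement G) k \<le> lap_eigsum T k"
    using is_threshold_complement[OF T(1)] T(2) ec by (intro exI[of _ "complement T"]) auto
qed

lemma empty_STD: "wf_graph (0, \<lambda>_ _. False) \<and> spectrally_threshold_dominated (0, \<lambda>_ _. False)"
  unfolding wf_graph_def spectrally_threshold_dominated_def by simp

theorem theorem3:
  shows "(\<forall>Gs. (\<forall>G \<in> set Gs. wf_graph G \<and> spectrally_threshold_dominated G) \<longrightarrow>
            spectrally_threshold_dominated (disjoint_union_list Gs))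
       \<and> (\<forall>G. wf_graph G \<and> spectrally_threshold_dominated G \<longrightarrow>
            spectrally_threshold_dominated (complement G))"
proof (intro conjI allI impI)
  fix Gs :: "graph list"
  assume "\<forall>G \<in> set Gs. wf_graph G \<and> spectrally_threshold_dominated G"
  hence "wf_graph (disjoint_union_list Gs) \<and> spectrally_threshold_dominated (disjoint_union_list Gs)"
  proof (induction Gs)
    case Nil thus ?case using empty_STD unfolding disjoint_union_list_def by simp
  next
    case (Cons G Gs)
    hence IH: "wf_graph (disjoint_union_list Gs)" "spectrally_threshold_dominated (disjoint_union_list Gs)"
      and G: "wf_graph G" "spectrally_threshold_dominated G" by auto
    have eq: "disjoint_union_list (G # Gs) = disjoint_union G (disjoint_union_list Gs)"
      unfolding disjoint_union_list_def by simp
    show ?case unfolding eq using wf_union[OF G(1) IH(1)] union_STD[OF G(1) IH(1) G(2) IH(2)] by simp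
  qed
  thus "spectrally_threshold_dominated (disjoint_union_list Gs)" by simp
next
  fix G assume "wf_graph G \<and> spectrally_threshold_dominated G"
  thus "spectrally_threshold_dominated (complement G)" using complement_STD by blast
qed


end
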